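(* Let $(Z,\delta)$ be a configuration satisfying: (i) the diameter of $Z$ is at most $4$; (ii) whenever $u,w\in V(Z)$ are at distance $4$ in $Z$, there is a path $P$ of length $4$ joining them in $Z$ such that either $P$ is not contained in the outer face boundary of $Z$, or $P=(u,v_1,v_2,v_3,w)$ is contained in the outer face boundary of $Z$ and some $v_i$ ($i\in\{1,2,3\}$) is not a cut-vertex of $Z$ and satisfies $\delta(v_i)-d_Z(v_i)\ge 2$. If $(Z,\delta)$ is contained in a triangulation $G$ and $G$ has no obstructing cycle all of whose vertices lie in (the copy of) $Z$, then $(Z,\delta)$ is induced in $G$.
   Context: A triangulation is a simple graph embedded in the sphere all of whose faces are triangles. A near-triangulation is a connected plane graph all of whose faces other than the outer face are triangles (single vertex or edge allowed). A configuration $(Z,\delta)$ consists of a near-triangulation $Z$ and $\delta:V(Z)\to\mathbb N$ with $\delta(v)=d_Z(v)$ for vertices not on the outer face, $\delta(v)>d_Z(v)$ for vertices on the outer face, and each cut-vertex $v$ of $Z$ lying in exactly two blocks with $\delta(v)=d_Z(v)+2$ (at most one cut-vertex). A triangulation $G$ contains $(Z,\delta)$ if $Z$ is isomorphic to a subgraph of $G$ such that every inner (triangular) face of $Z$ is a face of $G$, all these faces have the same orientation in $G$ as in $Z$, $d_G(v)=\delta(v)$ for every $v\in V(Z)$, and for a cut-vertex $v$ the two edges of $G$ at $v$ not in $Z$ are non-consecutive in the cyclic order around $v$. $(Z,\delta)$ is induced in $G$ if moreover (the copy of) $Z$ is an induced subgraph of $G$. A cycle $C$ in $G$ is obstructing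 if either it has length at most $4$ and each of the two sides of $C$ contains at least one vertex, or it has length $5$ and each side contains at least two vertices. *)

theory Defs
  imports Main
begin

text \<open>A simple graph on vertex set V is represented by its set of darts A
(ordered pairs (u,w) for every edge uw, in both directions).  A plane embedding
is a rotation system rot: a permutation of the darts that maps each dart to the
next dart with the same tail in the cyclic order around that tail.  Faces are
the orbits of the face permutation phi (u,w) = rot (w,u); the embedding is in
the sphere iff Euler's formula V - E + F = 2 holds (for connected graphs).\<close>

definition walk_in :: "'v set \<Rightarrow> ('v \<times> 'v) set \<Rightarrow> 'v list \<Rightarrow> bool" where
  "walk_in S A xs \<longleftrightarrow> xs \<noteq> [] \<and> set xs \<subseteq> S \<and>
     (\<forall>i. Suc i < length xs \<longrightarrow> (xs ! i, xs ! Suc i) \<in> A)"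

definition is_walk :: "('v \<times> 'v) set \<Rightarrow> 'v list \<Rightarrow> bool" where
  "is_walk A xs \<longleftrightarrow> xs \<noteq> [] \<and> (\<forall>i. Suc i < length xs \<longrightarrow> (xs ! i, xs ! Suc i) \<in> A)"

definition is_path :: "('v \<times> 'v) set \<Rightarrow> 'v list \<Rightarrow> bool" where
  "is_path A xs \<longleftrightarrow> is_walk A xs \<and> distinct xs"

definition connected_on :: "'v set \<Rightarrow> ('v \<times> 'v) set \<Rightarrow> bool" where
  "connected_on S A \<longleftrightarrow> (\<forall>u\<in>S. \<forall>w\<in>S. \<exists>xs. walk_in S A xs \<and> hd xs = u \<and> last xs = w)"

definition dist :: "('v \<times> 'v) set \<Rightarrow> 'v \<Rightarrow> 'v \<Rightarrow> nat" where
  "dist A u w = (LEAST n. \<exists>xs. is_walk A xs \<and> hd xs = u \<and> last xs = w \<and> length xs = Suc n)"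

definition deg :: "('v \<times> 'v) set \<Rightarrow> 'v \<Rightarrow> nat" where
  "deg A v = card {w. (v, w) \<in> A}"

definition simple_graph :: "'v set \<Rightarrow> ('v \<times> 'v) set \<Rightarrow> bool" where
  "simple_graph V A \<longleftrightarrow> finite V \<and> A \<subseteq> V \<times> V \<and>
     (\<forall>u w. (u, w) \<in> A \<longrightarrow> (w, u) \<in> A) \<and> (\<forall>u. (u, u) \<notin> A)"

definition rotation_system :: "('v \<times> 'v) set \<Rightarrow> ('v \<times> 'v \<Rightarrow> 'v \<times> 'v) \<Rightarrow> bool" where
  "rotation_system A rot \<longleftrightarrow> bij_betw rot A A \<and> (\<forall>d\<in>A. fst (rot d) = fst d) \<and>
     (\<forall>d\<in>A. \<forall>d'\<in>A. fst d = fst d' \<longrightarrow> (\<exists>n. (rot ^^ n) d = d'))"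

definition phi :: "('v \<times> 'v \<Rightarrow> 'v \<times> 'v) \<Rightarrow> 'v \<times> 'v \<Rightarrow> 'v \<times> 'v" where
  "phi rot d = rot (snd d, fst d)"

definition face_orbit :: "('v \<times> 'v \<Rightarrow> 'v \<times> 'v) \<Rightarrow> 'v \<times> 'v \<Rightarrow> ('v \<times> 'v) set" where
  "face_orbit rot d = {(phi rot ^^ n) d | n. True}"

definition faces :: "('v \<times> 'v) set \<Rightarrow> ('v \<times> 'v \<Rightarrow> 'v \<times> 'v) \<Rightarrow> ('v \<times> 'v) set set" where
  "faces A rot = face_orbit rot ` A"

definition plane_graph :: "'v set \<Rightarrow> ('v \<times> 'v) set \<Rightarrow> ('v \<times> 'v \<Rightarrow> 'v \<times> 'v) \<Rightarrow> bool" where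
  "plane_graph V A rot \<longleftrightarrow> simple_graph V A \<and> V \<noteq> {} \<and> connected_on V A \<and>
     rotation_system A rot \<and>
     (A = {} \<or> int (card V) - int (card A div 2) + int (card (faces A rot)) = 2)"

definition triangulation :: "'v set \<Rightarrow> ('v \<times> 'v) set \<Rightarrow> ('v \<times> 'v \<Rightarrow> 'v \<times> 'v) \<Rightarrow> bool" where
  "triangulation V A rot \<longleftrightarrow> plane_graph V A rot \<and> A \<noteq> {} \<and>
     (\<forall>F\<in>faces A rot. card F = 3)"

definition near_triangulation ::
  "'v set \<Rightarrow> ('v \<times> 'v) set \<Rightarrow> ('v \<times> 'v \<Rightarrow> 'v \<times> 'v) \<Rightarrow> ('v \<times> 'v) set \<Rightarrow> bool" where
  "near_triangulation V A rot Out \<longleftrightarrow> plane_graph V A rot \<and>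
     ((A = {} \<and> Out = {}) \<or> Out \<in> faces A rot) \<and>
     (\<forall>F\<in>faces A rot. F \<noteq> Out \<longrightarrow> card F = 3)"

definition outer_vertices :: "'v set \<Rightarrow> ('v \<times> 'v) set \<Rightarrow> ('v \<times> 'v) set \<Rightarrow> 'v set" where
  "outer_vertices V A Out = (if A = {} then V else fst ` Out)"

definition cut_vertex :: "'v set \<Rightarrow> ('v \<times> 'v) set \<Rightarrow> 'v \<Rightarrow> bool" where
  "cut_vertex V A v \<longleftrightarrow> v \<in> V \<and> \<not> connected_on (V - {v}) A"

definition nonseparable :: "'v set \<Rightarrow> ('v \<times> 'v) set \<Rightarrow> bool" where
  "nonseparable B A \<longleftrightarrow> connected_on B A \<and> (\<forall>x\<in>B. connected_on (B - {x}) A)"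

definition is_block :: "'v set \<Rightarrow> ('v \<times> 'v) set \<Rightarrow> 'v set \<Rightarrow> bool" where
  "is_block V A B \<longleftrightarrow> B \<subseteq> V \<and> 2 \<le> card B \<and> nonseparable B A \<and>
     (\<forall>B'. B \<subset> B' \<and> B' \<subseteq> V \<longrightarrow> \<not> nonseparable B' A)"

definition configuration ::
  "'v set \<Rightarrow> ('v \<times> 'v) set \<Rightarrow> ('v \<times> 'v \<Rightarrow> 'v \<times> 'v) \<Rightarrow> ('v \<times> 'v) set \<Rightarrow> ('v \<Rightarrow> nat) \<Rightarrow> bool" where
  "configuration V A rot Out \<delta> \<longleftrightarrow> near_triangulation V A rot Out \<and>
     (\<forall>v\<in>V. v \<notin> outer_vertices V A Out \<longrightarrow> \<delta> v = deg A v) \<and>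
     (\<forall>v\<in>V. v \<in> outer_vertices V A Out \<longrightarrow> \<delta> v > deg A v) \<and>
     (\<forall>v\<in>V. cut_vertex V A v \<longrightarrow>
        card {B. is_block V A B \<and> v \<in> B} = 2 \<and> \<delta> v = deg A v + 2) \<and>
     card {v\<in>V. cut_vertex V A v} \<le> 1"

definition contains_via ::
  "'v set \<Rightarrow> ('v \<times> 'v) set \<Rightarrow> ('v \<times> 'v \<Rightarrow> 'v \<times> 'v) \<Rightarrow> ('v \<times> 'v) set \<Rightarrow> ('v \<Rightarrow> nat) \<Rightarrow>
   'w set \<Rightarrow> ('w \<times> 'w) set \<Rightarrow> ('w \<times> 'w \<Rightarrow> 'w \<times> 'w) \<Rightarrow> ('v \<Rightarrow> 'w) \<Rightarrow> bool" where
  "contains_via V A rot Out \<delta> VG AG rotG f \<longleftrightarrow>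
     inj_on f V \<and> f ` V \<subseteq> VG \<and>
     (\<forall>(u, w)\<in>A. (f u, f w) \<in> AG) \<and>
     (\<forall>F\<in>faces A rot. F \<noteq> Out \<longrightarrow> map_prod f f ` F \<in> faces AG rotG) \<and>
     (\<forall>v\<in>V. deg AG (f v) = \<delta> v) \<and>
     (\<forall>v\<in>V. cut_vertex V A v \<longrightarrow>
        (\<forall>a b. (f v, a) \<in> AG - map_prod f f ` A \<and> (f v, b) \<in> AG - map_prod f f ` A \<and> a \<noteq> b
               \<longrightarrow> rotG (f v, a) \<noteq> (f v, b)))"

definition induced_via ::
  "'v set \<Rightarrow> ('v \<times> 'v) set \<Rightarrow> ('v \<times> 'v \<Rightarrow> 'v \<times> 'v) \<Rightarrow> ('v \<times> 'v) set \<Rightarrow> ('v \<Rightarrow> nat) \<Rightarrow>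
   'w set \<Rightarrow> ('w \<times> 'w) set \<Rightarrow> ('w \<times> 'w \<Rightarrow> 'w \<times> 'w) \<Rightarrow> ('v \<Rightarrow> 'w) \<Rightarrow> bool" where
  "induced_via V A rot Out \<delta> VG AG rotG f \<longleftrightarrow> contains_via V A rot Out \<delta> VG AG rotG f \<and>
     (\<forall>u\<in>V. \<forall>w\<in>V. (f u, f w) \<in> AG \<longrightarrow> (u, w) \<in> A)"

definition on_outer_boundary ::
  "'v set \<Rightarrow> ('v \<times> 'v) set \<Rightarrow> ('v \<times> 'v) set \<Rightarrow> 'v list \<Rightarrow> bool" where
  "on_outer_boundary V A Out P \<longleftrightarrow> set P \<subseteq> outer_vertices V A Out \<and>
     (\<forall>i. Suc i < length P \<longrightarrow> (P ! i, P ! Suc i) \<in> Out \<or> (P ! Suc i, P ! i) \<in> Out)"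

definition is_cycle :: "'w set \<Rightarrow> ('w \<times> 'w) set \<Rightarrow> 'w list \<Rightarrow> bool" where
  "is_cycle VG AG cs \<longleftrightarrow> 3 \<le> length cs \<and> distinct cs \<and> set cs \<subseteq> VG \<and>
     (\<forall>i<length cs. (cs ! i, cs ! ((i + 1) mod length cs)) \<in> AG)"

definition rot_between :: "('w \<times> 'w \<Rightarrow> 'w \<times> 'w) \<Rightarrow> 'w \<times> 'w \<Rightarrow> 'w \<times> 'w \<Rightarrow> 'w \<times> 'w \<Rightarrow> bool" where
  "rot_between rot d1 d2 d \<longleftrightarrow> (\<exists>j>0. (rot ^^ j) d1 = d \<and> (\<forall>i\<le>j. (rot ^^ i) d1 \<noteq> d2))"

definition cycle_side ::
  "'w set \<Rightarrow> ('w \<times> 'w) set \<Rightarrow> ('w \<times> 'w \<Rightarrow> 'w \<times> 'w) \<Rightarrow> 'w list \<Rightarrow> bool \<Rightarrow> 'w set" where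
  "cycle_side VG AG rotG cs forward = {x \<in> VG - set cs. \<exists>i<length cs. \<exists>y xs.
      (let c = cs ! i; nx = cs ! ((i + 1) mod length cs);
           pv = cs ! ((i + length cs - 1) mod length cs) in
       (c, y) \<in> AG \<and>
       (if forward then rot_between rotG (c, nx) (c, pv) (c, y)
        else rot_between rotG (c, pv) (c, nx) (c, y))) \<and>
      walk_in (VG - set cs) AG xs \<and> hd xs = y \<and> last xs = x}"

definition obstructing_cycle ::
  "'w set \<Rightarrow> ('w \<times> 'w) set \<Rightarrow> ('w \<times> 'w \<Rightarrow> 'w \<times> 'w) \<Rightarrow> 'w list \<Rightarrow> bool" where
  "obstructing_cycle VG AG rotG cs \<longleftrightarrow> is_cycle VG AG cs \<and>
     ((length cs \<le> 4 \<and> 1 \<le> card (cycle_side VG AG rotG cs True) \<and>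
                        1 \<le> card (cycle_side VG AG rotG cs False)) \<or>
      (length cs = 5 \<and> 2 \<le> card (cycle_side VG AG rotG cs True) \<and>
                        2 \<le> card (cycle_side VG AG rotG cs False)))"

end

theory Submission
  imports Defs
begin

definition orb :: "('a \<Rightarrow> 'a) \<Rightarrow> 'a \<Rightarrow> 'a set" where
  "orb p x = {(p ^^ n) x | n. True}"

definition ncyc :: "('a \<Rightarrow> 'a) \<Rightarrow> 'a set \<Rightarrow> nat" where
  "ncyc p D = card (orb p ` D)"

definition sw :: "'a \<Rightarrow> 'a \<Rightarrow> 'a \<Rightarrow> 'a" where
  "sw a b x = (if x = a then b else if x = b then a else x)"

lemma sw_sw[simp]: "sw a b (sw a b x) = x"
  by (auto simp: sw_def)

lemma orb_self[simp]: "x \<in> orb p x"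
  unfolding orb_def by (auto intro: exI[of _ 0])

lemma orb_step: "y \<in> orb p x \<Longrightarrow> p y \<in> orb p x"
proof -
  assume "y \<in> orb p x"
  then obtain n where "y = (p ^^ n) x" unfolding orb_def by auto
  then have "p y = (p ^^ Suc n) x" by simp
  then show ?thesis unfolding orb_def by blast
qed

lemma orb_closed: "\<forall>y\<in>orb p x. p y \<in> orb p x"
  using orb_step[of _ p x] by blast

lemma orb_funpow: "(p ^^ n) x \<in> orb p x"
  unfolding orb_def by auto

lemma orb_trans: "y \<in> orb p x \<Longrightarrow> z \<in> orb p y \<Longrightarrow> z \<in> orb p x"
proof -
  assume "y \<in> orb p x" "z \<in> orb p y"
  then obtain n m where "y = (p ^^ n) x" "z = (p ^^ m) y" unfolding orb_def by auto
  then have "z = (p ^^ (m + n)) x" by (simp add: funpow_add)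
  then show ?thesis unfolding orb_def by blast
qed

lemma closed_orb_sub:
  assumes "\<forall>y\<in>S. p y \<in> S" "x \<in> S" shows "orb p x \<subseteq> S"
proof -
  have "(p ^^ n) x \<in> S" for n using assms by (induct n) auto
  then show ?thesis unfolding orb_def by auto
qed

lemma agree_funpow:
  assumes "\<forall>y\<in>S. p y \<in> S" "\<forall>y\<in>S. q y = p y" "x \<in> S"
  shows "(q ^^ n) x = (p ^^ n) x \<and> (p ^^ n) x \<in> S"
  using assms by (induct n) auto

lemma agree_orb:
  assumes "\<forall>y\<in>S. p y \<in> S" "\<forall>y\<in>S. q y = p y" "x \<in> S"
  shows "orb q x = orb p x"
  using agree_funpow[OF assms] unfolding orb_def by auto

lemma funpow_in_D:
  assumes "bij_betw p D D" "x \<in> D" shows "(p ^^ n) x \<in> D"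
  using bij_betw_funpow[OF assms(1), of n] assms(2) bij_betwE by blast

lemma orb_sub_D:
  assumes "bij_betw p D D" "x \<in> D" shows "orb p x \<subseteq> D"
  using funpow_in_D[OF assms] unfolding orb_def by auto

lemma period_ex:
  assumes "finite D" "bij_betw p D D" "x \<in> D"
  shows "\<exists>n>0. (p ^^ n) x = x"
proof -
  have "\<not> inj_on (\<lambda>n. (p ^^ n) x) {0..card D}"
  proof
    assume "inj_on (\<lambda>n. (p ^^ n) x) {0..card D}"
    then have "card ((\<lambda>n. (p ^^ n) x) ` {0..card D}) = card {0..card D}"
      by (rule card_image)
    moreover have "(\<lambda>n. (p ^^ n) x) ` {0..card D} \<subseteq> D"
      using funpow_in_D[OF assms(2,3)] by auto
    then have "card ((\<lambda>n. (p ^^ n) x) ` {0..card D}) \<le> card D"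
      using assms(1) card_mono by blast
    ultimately show False by simp
  qed
  then obtain i j where ij: "i \<noteq> j" "(p ^^ i) x = (p ^^ j) x"
    unfolding inj_on_def by auto
  { fix i j assume ij: "i < j" "(p ^^ i) x = (p ^^ j) x"
    have inj: "inj_on (p ^^ i) D" using bij_betw_funpow[OF assms(2)] bij_betw_def by blast
    have "(p ^^ i) ((p ^^ (j - i)) x) = (p ^^ (i + (j - i))) x"
      by (simp add: funpow_add)
    then have "(p ^^ i) ((p ^^ (j - i)) x) = (p ^^ j) x"
      using ij by simp
    then have "(p ^^ i) ((p ^^ (j - i)) x) = (p ^^ i) x" using ij by simp
    then have "(p ^^ (j - i)) x = x"
      using inj funpow_in_D[OF assms(2,3)] assms(3) inj_on_def by metis
    then have ?thesis using ij by (intro exI[of _ "j - i"]) auto }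
  note * = this
  show ?thesis
  proof (cases "i < j")
    case True then show ?thesis using * ij by blast
  next
    case False then have "j < i" using ij by auto
    then show ?thesis using * ij by metis
  qed
qed

lemma funpow_mult_period: "(p ^^ n) x = x \<Longrightarrow> (p ^^ (k * n)) x = x"
proof (induct k)
  case (Suc k)
  then show ?case by (simp add: funpow_add comp_def)
qed simp

lemma orb_sym:
  assumes "finite D" "bij_betw p D D" "x \<in> D" "y \<in> orb p x"
  shows "x \<in> orb p y"
proof -
  obtain L where L: "L > 0" "(p ^^ L) x = x" using period_ex[OF assms(1-3)] by blast
  obtain n where n: "y = (p ^^ n) x" using assms(4) unfolding orb_def by auto
  have "n \<le> n * L" using L by simp
  have "(p ^^ (n * L - n)) y = (p ^^ (n * L - n + n)) x"
    by (simp add: n funpow_add)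
  also have "n * L - n + n = n * L" using \<open>n \<le> n * L\<close> by simp
  also have "(p ^^ (n * L)) x = x" using funpow_mult_period[OF L(2)] by simp
  finally show ?thesis unfolding orb_def by blast
qed

lemma orb_eq:
  assumes "finite D" "bij_betw p D D" "x \<in> D" "y \<in> orb p x"
  shows "orb p y = orb p x"
proof (intro set_eqI iffI)
  have xy: "x \<in> orb p y" by (rule orb_sym[OF assms])
  fix z
  show "z \<in> orb p y \<Longrightarrow> z \<in> orb p x" using orb_trans[OF assms(4)] by blast
  show "z \<in> orb p x \<Longrightarrow> z \<in> orb p y" using orb_trans[OF xy] by blast
qed

lemma sw_bij:
  assumes "a \<in> D" "b \<in> D" shows "bij_betw (sw a b) D D"
proof -
  have "sw a b ` D \<subseteq> D" using assms by (auto simp: sw_def)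
  moreover have "inj (sw a b)" by (metis injI sw_sw)
  moreover have "D \<subseteq> sw a b ` D"
  proof
    fix x assume "x \<in> D"
    then have "sw a b x \<in> D" using assms by (auto simp: sw_def)
    then show "x \<in> sw a b ` D" using image_eqI[of x "sw a b" "sw a b x"] by simp
  qed
  ultimately show ?thesis unfolding bij_betw_def by (auto intro: inj_on_subset)
qed

lemma merge_orb:
  assumes D: "finite D" "bij_betw p D D" and ab: "a \<in> D" "b \<in> D" "b \<notin> orb p a"
  defines "q \<equiv> p \<circ> sw a b"
  shows "orb q a = orb p a \<union> orb p b"
    and "\<And>x. x \<in> D \<Longrightarrow> x \<notin> orb p a \<union> orb p b \<Longrightarrow> orb q x = orb p x"
proof -
  have qD: "bij_betw q D D" unfolding q_def using sw_bij[OF ab(1,2)] D(2) by (rule bij_betw_trans)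
  have aob: "a \<notin> orb p b"
  proof
    assume "a \<in> orb p b"
    then have "b \<in> orb p a" using orb_sym[OF D ab(2)] by blast
    then show False using ab(3) by blast
  qed
  show "orb q a = orb p a \<union> orb p b"
  proof
    show "orb q a \<subseteq> orb p a \<union> orb p b"
    proof (rule closed_orb_sub)
      show "\<forall>y\<in>orb p a \<union> orb p b. q y \<in> orb p a \<union> orb p b"
      proof
        fix y assume y: "y \<in> orb p a \<union> orb p b"
        have "q y = p y \<or> q y = p a \<or> q y = p b" by (auto simp: q_def sw_def)
        then show "q y \<in> orb p a \<union> orb p b"
          using y orb_step[of y p a] orb_step[of y p b] orb_step[OF orb_self, of p a]
            orb_step[OF orb_self, of p b] by auto
      qed
    qed simp
  next
    let ?T = "orb q a"
    have pb: "p b \<in> ?T" using orb_step[OF orb_self, of q a] by (simp add: q_def sw_def)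
    have disj: "(p ^^ n) (p b) \<in> ?T \<or> b \<in> ?T" for n
    proof (induct n)
      case (Suc n)
      show ?case
      proof (cases "b \<in> ?T")
        case False
        then have T: "(p ^^ n) (p b) \<in> ?T" using Suc by auto
        have "(p ^^ n) (p b) \<in> orb p b"
          by (metis funpow_Suc_right o_apply orb_funpow)
        then have na: "(p ^^ n) (p b) \<noteq> a" using aob by auto
        have nb: "(p ^^ n) (p b) \<noteq> b" using T False by auto
        have "q ((p ^^ n) (p b)) = (p ^^ Suc n) (p b)" using na nb by (simp add: q_def sw_def)
        then show ?thesis using orb_step[OF T] by simp
      qed simp
    qed (use pb in simp)
    have "b \<in> orb p (p b)"
      using orb_sym[OF D, of b "p b"] ab(2) orb_step[OF orb_self, of p b] by blast
    then obtain m where "b = (p ^^ m) (p b)" unfolding orb_def by auto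
    then have bT: "b \<in> ?T" using disj[of m] by auto
    have "orb p b \<subseteq> ?T \<inter> orb p b"
    proof (rule closed_orb_sub)
      show "\<forall>y\<in>?T \<inter> orb p b. p y \<in> ?T \<inter> orb p b"
      proof
        fix y assume y: "y \<in> ?T \<inter> orb p b"
        have "y \<noteq> a" using y aob by auto
        then have "p y = q y \<or> y = b" by (auto simp: q_def sw_def)
        moreover have "p b = q a" by (simp add: q_def sw_def)
        ultimately show "p y \<in> ?T \<inter> orb p b" using y orb_step[of y q a] orb_step[OF orb_self, of q a]
          orb_step[of y p b] by auto
      qed
    qed (use bT in auto)
    moreover have "orb p a \<subseteq> ?T \<inter> orb p a"
    proof (rule closed_orb_sub)
      show "\<forall>y\<in>?T \<inter> orb p a. p y \<in> ?T \<inter> orb p a"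
      proof
        fix y assume y: "y \<in> ?T \<inter> orb p a"
        have "y \<noteq> b" using y ab(3) by auto
        then have "p y = q y \<or> y = a" by (auto simp: q_def sw_def)
        moreover have "p a = q b" using ab by (auto simp: q_def sw_def)
        ultimately show "p y \<in> ?T \<inter> orb p a" using y orb_step[of y q a] orb_step[of b q a] bT
          orb_step[of y p a] by auto
      qed
    qed auto
    ultimately show "orb p a \<union> orb p b \<subseteq> ?T" by blast
  qed
next
  fix x assume x: "x \<in> D" "x \<notin> orb p a \<union> orb p b"
  show "orb q x = orb p x"
  proof (rule agree_orb[where S = "orb p x"])
    show "\<forall>y\<in>orb p x. p y \<in> orb p x" by (rule orb_closed)
    show "\<forall>y\<in>orb p x. q y = p y"
    proof
      fix y assume y: "y \<in> orb p x"
      have xy: "x \<in> orb p y" by (rule orb_sym[OF D x(1) y])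
      have "y \<noteq> a" using x(2) xy by force
      moreover have "y \<noteq> b" using x(2) xy by force
      ultimately show "q y = p y" by (simp add: q_def sw_def)
    qed
  qed simp
qed

lemma merge_ncyc:
  assumes D: "finite D" "bij_betw p D D" and ab: "a \<in> D" "b \<in> D" "b \<notin> orb p a"
  shows "ncyc (p \<circ> sw a b) D + 1 = ncyc p D"
proof -
  define q where "q = p \<circ> sw a b"
  have qD: "bij_betw q D D" unfolding q_def using sw_bij[OF ab(1,2)] D(2) by (rule bij_betw_trans)
  have m1: "orb q a = orb p a \<union> orb p b" using merge_orb[OF assms] q_def by simp
  have m2: "\<And>x. x \<in> D \<Longrightarrow> x \<notin> orb p a \<union> orb p b \<Longrightarrow> orb q x = orb p x"
    using merge_orb[OF assms] q_def by simp
  let ?S = "orb p ` D"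
  have neq: "orb p a \<noteq> orb p b" using ab(3) orb_self by metis
  have eqset: "orb q ` D = insert (orb p a \<union> orb p b) (?S - {orb p a, orb p b})"
  proof (intro set_eqI iffI)
    fix X assume "X \<in> orb q ` D"
    then obtain x where x: "x \<in> D" "X = orb q x" by auto
    show "X \<in> insert (orb p a \<union> orb p b) (?S - {orb p a, orb p b})"
    proof (cases "x \<in> orb p a \<union> orb p b")
      case True
      then have "x \<in> orb q a" using m1 by simp
      then have "orb q x = orb q a" by (rule orb_eq[OF D(1) qD ab(1)])
      then show ?thesis using x m1 by simp
    next
      case False
      then have "orb p x \<noteq> orb p a" "orb p x \<noteq> orb p b" using orb_self[of x p] by auto
      then show ?thesis using x m2[OF x(1) False] by auto
    qed
  next
    fix X assume X: "X \<in> insert (orb p a \<union> orb p b) (?S - {orb p a, orb p b})"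
    show "X \<in> orb q ` D"
    proof (cases "X = orb p a \<union> orb p b")
      case True then show ?thesis using m1 ab(1) by auto
    next
      case False
      then obtain x where x: "x \<in> D" "X = orb p x" "X \<noteq> orb p a" "X \<noteq> orb p b" using X by auto
      have "x \<notin> orb p a \<union> orb p b"
      proof
        assume "x \<in> orb p a \<union> orb p b"
        then have "orb p x = orb p a \<or> orb p x = orb p b"
          using orb_eq[OF D ab(1), of x] orb_eq[OF D ab(2), of x] by blast
        then show False using x by blast
      qed
      then show ?thesis using m2[OF x(1)] x by auto
    qed
  qed
  have fin: "finite ?S" using D(1) by simp
  have notin: "orb p a \<union> orb p b \<notin> ?S - {orb p a, orb p b}"
  proof
    assume "orb p a \<union> orb p b \<in> ?S - {orb p a, orb p b}"
    then obtain x where x: "x \<in> D" "orb p a \<union> orb p b = orb p x" "orb p x \<noteq> orb p a" by auto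
    then have "a \<in> orb p x" using orb_self[of a p] by blast
    then have "orb p a = orb p x" by (rule orb_eq[OF D x(1)])
    then show False using x by simp
  qed
  have "card (orb q ` D) = card (?S - {orb p a, orb p b}) + 1"
    using eqset notin fin by simp
  moreover have "card (?S - {orb p a, orb p b}) + 2 = card ?S"
  proof -
    have s: "{orb p a, orb p b} \<subseteq> ?S" using ab(1,2) by auto
    have "card (?S - {orb p a, orb p b}) = card ?S - card {orb p a, orb p b}"
      using card_Diff_subset[OF _ s] by simp
    moreover have "card {orb p a, orb p b} = 2" using neq by simp
    moreover have "card {orb p a, orb p b} \<le> card ?S" using card_mono[OF fin s] .
    ultimately show ?thesis by simp
  qed
  ultimately show ?thesis unfolding ncyc_def q_def by simp
qed


lemma split_not_orb:
  assumes D: "finite D" "bij_betw p D D" and ab: "a \<in> D" "b \<in> D" "a \<noteq> b" "b \<in> orb p a"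
  shows "b \<notin> orb (p \<circ> sw a b) a"
proof
  define q where "q = p \<circ> sw a b"
  assume bq: "b \<in> orb (p \<circ> sw a b) a"
  have ex: "\<exists>L>0. (p ^^ L) a = a" using period_ex[OF D ab(1)] .
  define L where "L = (LEAST L. L > 0 \<and> (p ^^ L) a = a)"
  have L: "L > 0" "(p ^^ L) a = a" using LeastI_ex[OF ex] unfolding L_def by auto
  have Lmin: "\<And>m. 0 < m \<Longrightarrow> m < L \<Longrightarrow> (p ^^ m) a \<noteq> a"
    using not_less_Least unfolding L_def by blast
  obtain m0 where m0: "b = (p ^^ m0) a" using ab(4) unfolding orb_def by auto
  define n where "n = m0 mod L"
  have bn: "b = (p ^^ n) a" using funpow_mod_eq[OF L(2)] m0 n_def by simp
  have nL: "n < L" using L(1) n_def by simp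
  have n0: "0 < n" using bn ab(3) by (cases n) auto
  have inj: "\<And>k. inj_on (p ^^ k) D" using bij_betw_funpow[OF D(2)] bij_betw_def by blast
  have key: "\<And>m. n < m \<Longrightarrow> m < L \<Longrightarrow> (p ^^ m) a \<noteq> b"
  proof
    fix m assume m: "n < m" "m < L" "(p ^^ m) a = b"
    have "(p ^^ n) ((p ^^ (m - n)) a) = (p ^^ (n + (m - n))) a" by (simp add: funpow_add)
    also have "\<dots> = (p ^^ n) a" using m bn by simp
    finally have "(p ^^ (m - n)) a = a"
      using inj[of n] funpow_in_D[OF D(2) ab(1)] ab(1) unfolding inj_on_def by blast
    then show False using Lmin[of "m - n"] m by simp
  qed
  define T where "T = {(p ^^ m) a | m. n < m \<and> m \<le> L}"
  have aT: "a \<in> T" unfolding T_def using nL L(2) by (intro CollectI exI[of _ L]) auto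
  have cl: "\<forall>y\<in>T. q y \<in> T"
  proof
    fix y assume "y \<in> T"
    then obtain m where m: "y = (p ^^ m) a" "n < m" "m \<le> L" unfolding T_def by auto
    show "q y \<in> T"
    proof (cases "m = L")
      case True
      then have "y = a" using m L by simp
      then have "q y = (p ^^ Suc n) a" using bn ab(3) by (simp add: q_def sw_def)
      then show ?thesis unfolding T_def using nL by (auto intro!: exI[of _ "Suc n"])
    next
      case False
      then have mL: "m < L" using m by simp
      have "y \<noteq> a" using Lmin[of m] m mL n0 by simp
      moreover have "y \<noteq> b" using key[of m] m mL by simp
      ultimately have "q y = (p ^^ Suc m) a" using m by (simp add: q_def sw_def)
      then show ?thesis unfolding T_def using mL m by (auto intro!: exI[of _ "Suc m"])
    qed
  qed
  have "orb q a \<subseteq> T" by (rule closed_orb_sub[OF cl aT])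
  then have "b \<in> T" using bq q_def by auto
  then obtain m where m: "b = (p ^^ m) a" "n < m" "m \<le> L" unfolding T_def by auto
  show False
  proof (cases "m = L")
    case True then show False using m L ab(3) by simp
  next
    case False then show False using key[of m] m by simp
  qed
qed

lemma split_ncyc:
  assumes D: "finite D" "bij_betw p D D" and ab: "a \<in> D" "b \<in> D" "a \<noteq> b" "b \<in> orb p a"
  shows "ncyc (p \<circ> sw a b) D = ncyc p D + 1"
proof -
  define q where "q = p \<circ> sw a b"
  have qD: "bij_betw q D D" unfolding q_def using sw_bij[OF ab(1,2)] D(2) by (rule bij_betw_trans)
  have "b \<notin> orb q a" using split_not_orb[OF assms] q_def by simp
  from merge_ncyc[OF D(1) qD ab(1,2) this]
  have "ncyc (q \<circ> sw a b) D + 1 = ncyc q D" .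
  moreover have "q \<circ> sw a b = p" by (rule ext) (simp add: q_def)
  ultimately show ?thesis using q_def by simp
qed

definition comps :: "('a \<times> 'a) set \<Rightarrow> 'a set \<Rightarrow> nat" where
  "comps S D = card ((\<lambda>x. S\<^sup>* `` {x}) ` D)"

lemma rtrancl_sym:
  assumes "\<forall>x y. (x, y) \<in> S \<longrightarrow> (y, x) \<in> S" "(x, y) \<in> S\<^sup>*"
  shows "(y, x) \<in> S\<^sup>*"
  using assms(2)
proof induct
  case (step y z)
  then have "(z, y) \<in> S\<^sup>*" using assms(1) by auto
  then show ?case using step by (meson rtrancl_trans)
qed simp

lemma add_edge_rtrancl:
  assumes sym: "\<forall>x y. (x, y) \<in> S \<longrightarrow> (y, x) \<in> S"
    and "(x, y) \<in> (S \<union> {(d, e), (e, d)})\<^sup>*"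
  shows "(x, y) \<in> S\<^sup>* \<or> ((x, d) \<in> S\<^sup>* \<and> (e, y) \<in> S\<^sup>*) \<or> ((x, e) \<in> S\<^sup>* \<and> (d, y) \<in> S\<^sup>*)"
  using assms(2)
proof induct
  case base then show ?case by simp
next
  case (step y z)
  show ?case
  proof (cases "(y, z) \<in> S")
    case True
    then show ?thesis using step(3) by (meson rtrancl.rtrancl_into_rtrancl)
  next
    case False
    then have yz: "(y, z) = (d, e) \<or> (y, z) = (e, d)" using step(2) by auto
    have dd: "\<And>u. (u, d) \<in> S\<^sup>* \<Longrightarrow> (d, u) \<in> S\<^sup>*" "\<And>u. (u, e) \<in> S\<^sup>* \<Longrightarrow> (e, u) \<in> S\<^sup>*"
      using rtrancl_sym[OF sym] by blast+
    from step(3) show ?thesis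
    proof (elim disjE conjE)
      assume "(x, y) \<in> S\<^sup>*" then show ?thesis using yz by auto
    next
      assume a: "(x, d) \<in> S\<^sup>*" "(e, y) \<in> S\<^sup>*"
      show ?thesis
      proof (cases "(y, z) = (d, e)")
        case True
        then show ?thesis using a by auto
      next
        case False
        then have "y = e" "z = d" using yz by auto
        then show ?thesis using a by auto
      qed
    next
      assume a: "(x, e) \<in> S\<^sup>*" "(d, y) \<in> S\<^sup>*"
      show ?thesis
      proof (cases "(y, z) = (d, e)")
        case True
        then show ?thesis using a by auto
      next
        case False
        then have "y = e" "z = d" using yz by auto
        then show ?thesis using a by auto
      qed
    qed
  qed
qed

lemma class_eq:
  assumes sym: "\<forall>x y. (x, y) \<in> S \<longrightarrow> (y, x) \<in> S" and "(x, y) \<in> S\<^sup>*"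
  shows "S\<^sup>* `` {x} = S\<^sup>* `` {y}"
proof -
  have "(y, x) \<in> S\<^sup>*" using rtrancl_sym[OF assms] .
  then show ?thesis using assms(2) by (auto intro: rtrancl_trans)
qed

lemma comps_add_edge:
  assumes sym: "\<forall>x y. (x, y) \<in> S \<longrightarrow> (y, x) \<in> S" and fin: "finite D"
    and de: "d \<in> D" "e \<in> D"
  shows "comps S D \<le> comps (S \<union> {(d, e), (e, d)}) D + 1"
proof -
  let ?S' = "S \<union> {(d, e), (e, d)}"
  let ?C = "(\<lambda>x. S\<^sup>* `` {x}) ` D"
  let ?C' = "(\<lambda>x. ?S'\<^sup>* `` {x}) ` D"
  define F where "F X = ?S'\<^sup>* `` X" for X
  have sub: "S\<^sup>* \<subseteq> ?S'\<^sup>*" by (rule rtrancl_mono) auto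
  have Fx: "F (S\<^sup>* `` {x}) = ?S'\<^sup>* `` {x}" for x
    unfolding F_def using sub by (auto intro: rtrancl_trans)
  have "inj_on F (?C - {S\<^sup>* `` {e}})"
  proof (rule inj_onI)
    fix X Y assume X: "X \<in> ?C - {S\<^sup>* `` {e}}" and Y: "Y \<in> ?C - {S\<^sup>* `` {e}}" and FXY: "F X = F Y"
    obtain x where x: "x \<in> D" "X = S\<^sup>* `` {x}" using X by auto
    obtain y where y: "y \<in> D" "Y = S\<^sup>* `` {y}" using Y by auto
    have "y \<in> ?S'\<^sup>* `` {x}" using FXY Fx x y by auto
    then have "(x, y) \<in> ?S'\<^sup>*" by simp
    from add_edge_rtrancl[OF sym this]
    show "X = Y"
    proof (elim disjE conjE)
      assume "(x, y) \<in> S\<^sup>*" then show ?thesis using class_eq[OF sym] x y by simp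
    next
      assume "(e, y) \<in> S\<^sup>*"
      then have "Y = S\<^sup>* `` {e}" using class_eq[OF sym] y by simp
      then show ?thesis using Y by simp
    next
      assume "(x, e) \<in> S\<^sup>*"
      then have "X = S\<^sup>* `` {e}" using class_eq[OF sym] x by simp
      then show ?thesis using X by simp
    qed
  qed
  moreover have "F ` (?C - {S\<^sup>* `` {e}}) \<subseteq> ?C'" using Fx by auto
  ultimately have "card (?C - {S\<^sup>* `` {e}}) \<le> card ?C'"
    by (intro card_inj_on_le) (use fin in auto)
  moreover have "card ?C \<le> card (?C - {S\<^sup>* `` {e}}) + 1"
  proof (cases "S\<^sup>* `` {e} \<in> ?C")
    case True
    then show ?thesis using fin card_Diff_singleton[OF True] card_gt_0_iff by fastforce
  qed simp
  ultimately show ?thesis unfolding comps_def by simp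
qed

definition sM :: "('a \<Rightarrow> 'a) \<Rightarrow> 'a set \<Rightarrow> 'a \<Rightarrow> 'a" where
  "sM s M x = (if x \<in> M then s x else x)"

definition steps :: "('a \<Rightarrow> 'a) \<Rightarrow> 'a set \<Rightarrow> ('a \<Rightarrow> 'a) \<Rightarrow> 'a set \<Rightarrow> ('a \<times> 'a) set" where
  "steps al D s M = {(x, al x) | x. x \<in> D} \<union> {(al x, x) | x. x \<in> D} \<union> {(x, s x) | x. x \<in> M}"

lemma sM_bij:
  assumes "\<forall>x\<in>M. s x \<in> M \<and> s (s x) = x" and that: "M \<subseteq> D"
  shows "bij_betw (sM s M) D D"
proof -
  have inv: "sM s M (sM s M x) = x" for x using assms by (auto simp: sM_def)
  have "sM s M ` D \<subseteq> D" using that assms by (auto simp: sM_def)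
  moreover have "inj (sM s M)" by (metis injI inv)
  moreover have "D \<subseteq> sM s M ` D"
  proof
    fix x assume "x \<in> D"
    then have "sM s M x \<in> D" using that assms by (auto simp: sM_def)
    then show "x \<in> sM s M ` D" using image_eqI[of x "sM s M" "sM s M x"] inv by simp
  qed
  ultimately show ?thesis unfolding bij_betw_def by (auto intro: inj_on_subset)
qed

lemma steps_sym:
  assumes "\<forall>x\<in>M. s x \<in> M \<and> s (s x) = x"
  shows "\<forall>x y. (x, y) \<in> steps al D s M \<longrightarrow> (y, x) \<in> steps al D s M"
proof (intro allI impI)
  fix x y assume "(x, y) \<in> steps al D s M"
  then consider "x \<in> D" "y = al x" | "y \<in> D" "x = al y" | "x \<in> M" "y = s x"
    unfolding steps_def by auto
  then show "(y, x) \<in> steps al D s M"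
  proof cases
    case 3
    then have "s y = x" "y \<in> M" using assms by auto
    then show ?thesis unfolding steps_def by blast
  qed (auto simp: steps_def)
qed

lemma comps_base:
  assumes "finite D" "bij_betw al D D"
  shows "comps (steps al D s {}) D = ncyc al D"
proof -
  have "(steps al D s {})\<^sup>* `` {x} = orb al x" if x: "x \<in> D" for x
  proof
    show "(steps al D s {})\<^sup>* `` {x} \<subseteq> orb al x"
    proof
      fix y assume "y \<in> (steps al D s {})\<^sup>* `` {x}"
      then have "(x, y) \<in> (steps al D s {})\<^sup>*" by simp
      then show "y \<in> orb al x"
      proof induct
        case (step y z)
        then consider "y \<in> D" "z = al y" | "z \<in> D" "y = al z" unfolding steps_def by auto
        then show ?case
        proof cases
          case 1 then show ?thesis using step orb_step by metis
        next
          case 2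
          have "z \<in> orb al (al z)" using orb_sym[OF assms 2(1), of "al z"] orb_step[OF orb_self, of al z] by blast
          then show ?thesis using orb_trans[of "al z" al x z] step 2 by simp
        qed
      qed simp
    qed
  next
    show "orb al x \<subseteq> (steps al D s {})\<^sup>* `` {x}"
    proof
      fix y assume "y \<in> orb al x"
      then obtain n where n: "y = (al ^^ n) x" unfolding orb_def by auto
      have "(x, (al ^^ n) x) \<in> (steps al D s {})\<^sup>*" for n
      proof (induct n)
        case (Suc n)
        have "((al ^^ n) x, (al ^^ Suc n) x) \<in> steps al D s {}"
          using funpow_in_D[OF assms(2) x] unfolding steps_def by auto
        then show ?case using Suc by (meson rtrancl.rtrancl_into_rtrancl)
      qed simp
      then show "y \<in> (steps al D s {})\<^sup>* `` {x}" using n by simp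
    qed
  qed
  then have "(\<lambda>x. (steps al D s {})\<^sup>* `` {x}) ` D = orb al ` D" by auto
  then show ?thesis unfolding comps_def ncyc_def by simp
qed

lemma orb_in_rtrancl:
  assumes "\<forall>x\<in>D. (x, q x) \<in> S\<^sup>* \<and> q x \<in> D" "x \<in> D" "y \<in> orb q x"
  shows "(x, y) \<in> S\<^sup>*"
proof -
  obtain n where n: "y = (q ^^ n) x" using assms(3) unfolding orb_def by auto
  have "(x, (q ^^ n) x) \<in> S\<^sup>* \<and> (q ^^ n) x \<in> D" for n
    by (induct n) (use assms in \<open>auto intro: rtrancl_trans\<close>)
  then show ?thesis using n by simp
qed

theorem genus_ineq:
  assumes fin: "finite D" and al: "bij_betw al D D"
    and s: "\<forall>x\<in>D. s x \<in> D \<and> s x \<noteq> x \<and> s (s x) = x"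
  shows "M \<subseteq> D \<Longrightarrow> (\<forall>x\<in>M. s x \<in> M) \<Longrightarrow>
    2 * (ncyc (al \<circ> sM s M) D + ncyc al D) \<le> 4 * comps (steps al D s M) D + card M"
proof (induct "card M" arbitrary: M rule: less_induct)
  case (less M)
  have sMs: "\<forall>x\<in>M. s x \<in> M \<and> s (s x) = x" using less s by auto
  show ?case
  proof (cases "M = {}")
    case True
    have "al \<circ> sM s M = al" using True by (auto simp: sM_def)
    then show ?thesis using comps_base[OF fin al, of s] True by simp
  next
    case False
    then obtain d where d: "d \<in> M" by auto
    define e where "e = s d"
    have e: "e \<in> M" "e \<noteq> d" "s e = d" using d less(2,3) s e_def by auto
    define M0 where "M0 = M - {d, e}"
    have finM: "finite M" using less(2) fin finite_subset by blast
    have cM: "card M = card M0 + 2"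
    proof -
      have s: "{d, e} \<subseteq> M" using d e by auto
      have "card M0 = card M - card {d, e}" unfolding M0_def using card_Diff_subset[OF _ s] by simp
      moreover have "card {d, e} = 2" using e(2) by simp
      moreover have "card {d, e} \<le> card M" using card_mono[OF finM s] .
      ultimately show ?thesis by simp
    qed
    have M0D: "M0 \<subseteq> D" using less(2) M0_def by auto
    have M0s: "\<forall>x\<in>M0. s x \<in> M0"
    proof
      fix x assume x: "x \<in> M0"
      then have "s x \<in> M" using less(3) M0_def by auto
      moreover have "s x \<noteq> d" using x e_def s less(2) M0_def by auto
      moreover have "s x \<noteq> e" using x e d s less(2) M0_def by (metis DiffD1 DiffD2 insertCI subsetD)
      ultimately show "s x \<in> M0" using M0_def by auto
    qed
    have IH: "2 * (ncyc (al \<circ> sM s M0) D + ncyc al D) \<le> 4 * comps (steps al D s M0) D + card M0"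
      using less(1)[OF _ M0D M0s] cM by simp
    have dD: "d \<in> D" "e \<in> D" using d e less(2) by auto
    have sMeq: "sM s M = sM s M0 \<circ> sw d e"
      by (rule ext) (use e e_def d in \<open>auto simp: sM_def sw_def M0_def\<close>)
    define p where "p = al \<circ> sM s M0"
    have pM: "al \<circ> sM s M = p \<circ> sw d e" unfolding p_def sMeq by (simp add: comp_assoc)
    have sMs0: "\<forall>x\<in>M0. s x \<in> M0 \<and> s (s x) = x" using M0s s M0D by auto
    have pD: "bij_betw p D D" unfolding p_def using sM_bij[OF sMs0 M0D] al by (rule bij_betw_trans)
    have symM0: "\<forall>x y. (x, y) \<in> steps al D s M0 \<longrightarrow> (y, x) \<in> steps al D s M0"
      by (rule steps_sym[OF sMs0])
    have stepsM: "steps al D s M = steps al D s M0 \<union> {(d, e), (e, d)}"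
      unfolding steps_def M0_def using d e e_def by auto
    show ?thesis
    proof (cases "e \<in> orb p d")
      case True
      have "ncyc (al \<circ> sM s M) D = ncyc p D + 1"
        unfolding pM by (rule split_ncyc[OF fin pD dD e(2)[symmetric] True])
      moreover have "comps (steps al D s M) D = comps (steps al D s M0) D"
      proof -
        have pst: "\<forall>x\<in>D. (x, p x) \<in> (steps al D s M0)\<^sup>* \<and> p x \<in> D"
        proof
          fix x assume x: "x \<in> D"
          have "(x, sM s M0 x) \<in> (steps al D s M0)\<^sup>*"
            unfolding sM_def steps_def by auto
          moreover have "sM s M0 x \<in> D" using x sMs0 M0D by (auto simp: sM_def)
          moreover have "(sM s M0 x, p x) \<in> steps al D s M0"
            unfolding p_def steps_def using calculation(2) by auto
          ultimately show "(x, p x) \<in> (steps al D s M0)\<^sup>* \<and> p x \<in> D"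
            using bij_betwE[OF pD] x by (meson rtrancl.rtrancl_into_rtrancl)
        qed
        have de: "(d, e) \<in> (steps al D s M0)\<^sup>*" by (rule orb_in_rtrancl[OF pst dD(1) True])
        have ed: "(e, d) \<in> (steps al D s M0)\<^sup>*" by (rule rtrancl_sym[OF symM0 de])
        have "(steps al D s M)\<^sup>* = (steps al D s M0)\<^sup>*"
          unfolding stepsM
        proof (rule rtrancl_subset)
          show "steps al D s M0 \<subseteq> steps al D s M0 \<union> {(d, e), (e, d)}" by blast
          show "steps al D s M0 \<union> {(d, e), (e, d)} \<subseteq> (steps al D s M0)\<^sup>*"
            using de ed by auto
        qed
        then show ?thesis unfolding comps_def by simp
      qed
      ultimately show ?thesis using IH cM unfolding p_def by simp
    next
      case False
      have "ncyc (al \<circ> sM s M) D + 1 = ncyc p D"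
        unfolding pM by (rule merge_ncyc[OF fin pD dD False])
      moreover have "comps (steps al D s M0) D \<le> comps (steps al D s M) D + 1"
        unfolding stepsM by (rule comps_add_edge[OF symM0 fin dD])
      ultimately show ?thesis using IH cM unfolding p_def by simp
    qed
  qed
qed

theorem genus_connected:
  assumes fin: "finite D" and al: "bij_betw al D D"
    and s: "\<forall>x\<in>D. s x \<in> D \<and> s x \<noteq> x \<and> s (s x) = x"
    and conn: "x0 \<in> D" "\<forall>x\<in>D. (x, x0) \<in> (steps al D s D)\<^sup>*"
  shows "2 * (ncyc (al \<circ> sM s D) D + ncyc al D) \<le> 4 + card D"
proof -
  have "2 * (ncyc (al \<circ> sM s D) D + ncyc al D) \<le> 4 * comps (steps al D s D) D + card D"
    using genus_ineq[OF fin al s, of D] s by auto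
  moreover have "comps (steps al D s D) D = 1"
  proof -
    have sy: "\<forall>x y. (x, y) \<in> steps al D s D \<longrightarrow> (y, x) \<in> steps al D s D"
      by (rule steps_sym) (use s in auto)
    have "(\<lambda>x. (steps al D s D)\<^sup>* `` {x}) ` D = {(steps al D s D)\<^sup>* `` {x0}}"
      using class_eq[OF sy] conn by auto
    then show ?thesis unfolding comps_def by simp
  qed
  ultimately show ?thesis by simp
qed


definition swp :: "'a \<times> 'a \<Rightarrow> 'a \<times> 'a" where "swp d = (snd d, fst d)"

lemma swp_swp[simp]: "swp (swp d) = d" by (simp add: swp_def)

lemma phi_swp: "phi rot = rot \<circ> swp" by (rule ext) (simp add: phi_def swp_def)

lemma ncyc_cong:
  assumes "bij_betw p D D" "\<forall>x\<in>D. p' x = p x"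
  shows "ncyc p' D = ncyc p D"
proof -
  have cl: "\<forall>y\<in>D. p y \<in> D" using assms(1) bij_betwE by blast
  have "orb p' x = orb p x" if "x \<in> D" for x by (rule agree_orb[OF cl assms(2) that])
  then show ?thesis unfolding ncyc_def by (metis image_cong)
qed

lemma walk_in_tl: "walk_in S A (x # xs) \<Longrightarrow> xs \<noteq> [] \<Longrightarrow> walk_in S A xs"
  unfolding walk_in_def
proof (intro conjI allI impI)
  fix i assume a: "x # xs \<noteq> [] \<and> set (x # xs) \<subseteq> S \<and>
      (\<forall>i. Suc i < length (x # xs) \<longrightarrow> ((x # xs) ! i, (x # xs) ! Suc i) \<in> A)" "Suc i < length xs"
  then have "((x # xs) ! Suc i, (x # xs) ! Suc (Suc i)) \<in> A" by auto
  then show "(xs ! i, xs ! Suc i) \<in> A" by simp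
qed auto

lemma walk_in_hd2: "walk_in S A (x # y # xs) \<Longrightarrow> (x, y) \<in> A"
  unfolding walk_in_def by force

context
  fixes V :: "'v set" and A :: "('v \<times> 'v) set" and rot :: "'v \<times> 'v \<Rightarrow> 'v \<times> 'v"
  assumes pg: "plane_graph V A rot"
begin

lemma pg_simple: "simple_graph V A" using pg unfolding plane_graph_def by simp
lemma finV: "finite V" using pg_simple unfolding simple_graph_def by simp
lemma AV: "(u, w) \<in> A \<Longrightarrow> u \<in> V \<and> w \<in> V" using pg_simple unfolding simple_graph_def by auto
lemma finA: "finite A"
proof -
  have "A \<subseteq> V \<times> V" using pg_simple unfolding simple_graph_def by simp
  then show ?thesis using finV finite_subset by blast
qed
lemma symA: "(u, w) \<in> A \<Longrightarrow> (w, u) \<in> A" using pg_simple unfolding simple_graph_def by simp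
lemma irrA: "(u, u) \<notin> A" using pg_simple unfolding simple_graph_def by simp
lemma rotsys: "rotation_system A rot" using pg unfolding plane_graph_def by simp
lemma rot_bij: "bij_betw rot A A" using rotsys unfolding rotation_system_def by simp
lemma rot_fst: "d \<in> A \<Longrightarrow> fst (rot d) = fst d" using rotsys unfolding rotation_system_def by simp
lemma rot_in: "d \<in> A \<Longrightarrow> rot d \<in> A" using rot_bij bij_betwE by blast
lemma rot_reach: "d \<in> A \<Longrightarrow> d' \<in> A \<Longrightarrow> fst d = fst d' \<Longrightarrow> \<exists>n. (rot ^^ n) d = d'"
  using rotsys unfolding rotation_system_def by blast
lemma conn: "connected_on V A" using pg unfolding plane_graph_def by simp

lemma swp_in: "d \<in> A \<Longrightarrow> swp d \<in> A" using symA by (cases d) (simp add: swp_def)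

lemma swp_bij: "bij_betw swp A A"
proof -
  have "inj swp" by (metis injI swp_swp)
  moreover have "swp ` A = A"
  proof
    show "swp ` A \<subseteq> A" using swp_in by auto
    show "A \<subseteq> swp ` A" using swp_in by (metis image_eqI subsetI swp_swp)
  qed
  ultimately show ?thesis unfolding bij_betw_def by (auto intro: inj_on_subset)
qed

lemma phi_bij: "bij_betw (phi rot) A A"
  unfolding phi_swp using swp_bij rot_bij by (rule bij_betw_trans)

lemma phi_in: "d \<in> A \<Longrightarrow> phi rot d \<in> A" using phi_bij bij_betwE by blast

lemma rot_funpow: "d \<in> A \<Longrightarrow> (rot ^^ n) d \<in> A \<and> fst ((rot ^^ n) d) = fst d"
  by (induct n) (auto simp: rot_in rot_fst)

lemma orb_rot: "d \<in> A \<Longrightarrow> orb rot d = {d' \<in> A. fst d' = fst d}"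
proof (intro set_eqI iffI)
  fix x assume "d \<in> A" "x \<in> orb rot d"
  then show "x \<in> {d' \<in> A. fst d' = fst d}" using rot_funpow[of d] unfolding orb_def by auto
next
  fix x assume "d \<in> A" "x \<in> {d' \<in> A. fst d' = fst d}"
  then obtain n where "(rot ^^ n) d = x" using rot_reach[of d x] by auto
  then show "x \<in> orb rot d" unfolding orb_def by auto
qed

lemma ncyc_rot:
  assumes "\<forall>v\<in>V. \<exists>w. (v, w) \<in> A"
  shows "ncyc rot A = card V"
proof -
  have "orb rot ` A = (\<lambda>v. {d' \<in> A. fst d' = v}) ` V"
  proof
    show "orb rot ` A \<subseteq> (\<lambda>v. {d' \<in> A. fst d' = v}) ` V"
      using orb_rot AV by fastforce
    show "(\<lambda>v. {d' \<in> A. fst d' = v}) ` V \<subseteq> orb rot ` A"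
    proof
      fix X assume "X \<in> (\<lambda>v. {d' \<in> A. fst d' = v}) ` V"
      then obtain v where v: "v \<in> V" "X = {d' \<in> A. fst d' = v}" by auto
      obtain w where "(v, w) \<in> A" using assms v by auto
      then show "X \<in> orb rot ` A" using orb_rot[of "(v, w)"] v by force
    qed
  qed
  moreover have "inj_on (\<lambda>v. {d' \<in> A. fst d' = v}) V"
  proof (rule inj_onI)
    fix v v' assume "v \<in> V" "v' \<in> V" "{d' \<in> A. fst d' = v} = {d' \<in> A. fst d' = v'}"
    moreover obtain w where "(v, w) \<in> A" using assms \<open>v \<in> V\<close> by auto
    ultimately show "v = v'" by (metis (mono_tags, lifting) fst_conv mem_Collect_eq)
  qed
  ultimately show ?thesis unfolding ncyc_def by (simp add: card_image)
qed

lemma ncyc_phi: "ncyc (phi rot) A = card (faces A rot)"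
  unfolding ncyc_def faces_def face_orbit_def orb_def by simp

lemma face_orbit_orb: "face_orbit rot d = orb (phi rot) d"
  unfolding face_orbit_def orb_def by simp

lemma no_isolated:
  assumes "v \<in> V" "w \<in> V" "v \<noteq> w"
  shows "\<forall>x\<in>V. \<exists>y. (x, y) \<in> A"
proof
  fix x assume x: "x \<in> V"
  obtain y where "y \<in> V" "y \<noteq> x" using assms by auto
  then obtain xs where xs: "walk_in V A xs" "hd xs = x" "last xs = y"
    using conn x unfolding connected_on_def by blast
  have "length xs \<noteq> 1"
  proof
    assume "length xs = 1"
    then have "hd xs = last xs" by (cases xs) auto
    then show False using xs \<open>y \<noteq> x\<close> by simp
  qed
  moreover have "xs \<noteq> []" using xs unfolding walk_in_def by simp
  ultimately have "Suc 0 < length xs" by (cases xs) auto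
  then have "(xs ! 0, xs ! 1) \<in> A" using xs unfolding walk_in_def by auto
  moreover have "xs ! 0 = x" using xs \<open>xs \<noteq> []\<close> by (simp add: hd_conv_nth)
  ultimately show "\<exists>y. (x, y) \<in> A" by auto
qed

lemma walk_darts:
  assumes R: "\<forall>d\<in>A. (d, swp d) \<in> R\<^sup>*"
    and same: "\<forall>d\<in>A. \<forall>d'\<in>A. fst d = fst d' \<and> fst d \<in> S \<longrightarrow> (d, d') \<in> R\<^sup>*"
  shows "walk_in S A xs \<Longrightarrow> d1 \<in> A \<Longrightarrow> fst d1 = hd xs \<Longrightarrow> d2 \<in> A \<Longrightarrow> fst d2 = last xs
     \<Longrightarrow> (d1, d2) \<in> R\<^sup>*"
proof (induct xs arbitrary: d1)
  case Nil then show ?case by (simp add: walk_in_def)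
next
  case (Cons x xs)
  show ?case
  proof (cases xs)
    case Nil
    then show ?thesis using Cons same unfolding walk_in_def by auto
  next
    case (Cons y ys)
    have xy: "(x, y) \<in> A" using Cons.prems(1) Cons unfolding walk_in_def by force
    have "xs \<noteq> []" using \<open>xs = y # ys\<close> by simp
    then have wxs: "walk_in S A xs" by (rule walk_in_tl[OF Cons.prems(1)])
    have xS: "x \<in> S" using Cons.prems(1) unfolding walk_in_def by simp
    have "(d1, (x, y)) \<in> R\<^sup>*" using same Cons.prems(2,3) xy xS by auto
    moreover have "((x, y), (y, x)) \<in> R\<^sup>*" using R xy by (auto simp: swp_def)
    moreover have "((y, x), d2) \<in> R\<^sup>*"
      using Cons.hyps[OF wxs symA[OF xy]] Cons.prems Cons by simp
    ultimately show ?thesis by (meson rtrancl_trans)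
  qed
qed

theorem outer_split:
  assumes Out: "Out \<in> faces A rot" and av: "(a, v) \<in> Out" and bv: "(b, v) \<in> Out" and ab: "a \<noteq> b"
  shows "\<not> (\<exists>xs. walk_in (V - {v}) A xs \<and> hd xs = a \<and> last xs = b)"
proof
  assume "\<exists>xs. walk_in (V - {v}) A xs \<and> hd xs = a \<and> last xs = b"
  then obtain xs where xs: "walk_in (V - {v}) A xs" "hd xs = a" "last xs = b" by blast
  obtain d0 where d0: "d0 \<in> A" "Out = face_orbit rot d0" using Out unfolding faces_def by auto
  have OutA: "Out \<subseteq> A" using d0 orb_sub_D[OF phi_bij d0(1)] unfolding face_orbit_orb by simp
  have avA: "(a, v) \<in> A" and bvA: "(b, v) \<in> A" using av bv OutA by auto
  define p where "p = (v, a)"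
  define q where "q = (v, b)"
  have pA: "p \<in> A" and qA: "q \<in> A" using symA avA bvA p_def q_def by auto
  have pq: "p \<noteq> q" using ab p_def q_def by simp
  have qp: "q \<in> orb rot p" using orb_rot[OF pA] qA p_def q_def by simp
  define rot' where "rot' = rot \<circ> sw p q"
  have rot'bij: "bij_betw rot' A A" unfolding rot'_def using sw_bij[OF pA qA] rot_bij by (rule bij_betw_trans)
  have c1: "ncyc rot' A = ncyc rot A + 1"
    unfolding rot'_def by (rule split_ncyc[OF finA rot_bij pA qA pq qp])
  have sp: "swp p = (a, v)" "swp q = (b, v)" using p_def q_def by (auto simp: swp_def)
  have spq: "swp q \<in> orb (phi rot) (swp p)"
  proof -
    have "swp p \<in> orb (phi rot) d0" "swp q \<in> orb (phi rot) d0" using av bv sp d0 face_orbit_orb by auto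
    then show ?thesis using orb_eq[OF finA phi_bij d0(1)] by metis
  qed
  have c2: "ncyc (phi rot \<circ> sw (swp p) (swp q)) A = ncyc (phi rot) A + 1"
    by (rule split_ncyc[OF finA phi_bij swp_in[OF pA] swp_in[OF qA] _ spq]) (use sp ab in auto)
  have eqf: "\<forall>x\<in>A. (rot' \<circ> sM swp A) x = (phi rot \<circ> sw (swp p) (swp q)) x"
  proof
    fix x assume "x \<in> A"
    have "sw p q (swp x) = swp (sw (swp p) (swp q) x)"
      by (cases x, cases p, cases q) (auto simp: sw_def swp_def)
    then show "(rot' \<circ> sM swp A) x = (phi rot \<circ> sw (swp p) (swp q)) x"
      using \<open>x \<in> A\<close> by (simp add: rot'_def sM_def phi_swp)
  qed
  have phibij2: "bij_betw (phi rot \<circ> sw (swp p) (swp q)) A A"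
    using sw_bij[OF swp_in[OF pA] swp_in[OF qA]] phi_bij by (rule bij_betw_trans)
  have c3: "ncyc (rot' \<circ> sM swp A) A = ncyc (phi rot) A + 1"
    using ncyc_cong[OF phibij2 eqf] c2 by (simp add: comp_def)
  have sprops: "\<forall>x\<in>A. swp x \<in> A \<and> swp x \<noteq> x \<and> swp (swp x) = x"
    using swp_in irrA by (auto simp: swp_def)
  let ?R = "steps rot' A swp A"
  have Rrot: "\<And>x. x \<in> A \<Longrightarrow> (x, rot' x) \<in> ?R\<^sup>*" unfolding steps_def by auto
  have Rswp: "\<forall>d\<in>A. (d, swp d) \<in> ?R\<^sup>*" unfolding steps_def by auto
  have symR: "\<forall>x y. (x, y) \<in> ?R \<longrightarrow> (y, x) \<in> ?R"
    by (rule steps_sym) (use sprops in auto)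
  have fstp: "fst p = v" "fst q = v" using p_def q_def by auto
  have rot'cl: "\<forall>x\<in>A. (x, rot' x) \<in> ?R\<^sup>* \<and> rot' x \<in> A"
    using Rrot bij_betwE[OF rot'bij] by blast
  have same: "\<forall>d\<in>A. \<forall>d'\<in>A. fst d = fst d' \<and> fst d \<in> V - {v} \<longrightarrow> (d, d') \<in> ?R\<^sup>*"
  proof (intro ballI impI)
    fix d d' assume d: "d \<in> A" "d' \<in> A" "fst d = fst d' \<and> fst d \<in> V - {v}"
    obtain n where n: "(rot ^^ n) d = d'" using rot_reach[of d d'] d by blast
    let ?S = "{x \<in> A. fst x = fst d}"
    have cl: "\<forall>y\<in>?S. rot y \<in> ?S" using rot_in rot_fst by auto
    have ag: "\<forall>y\<in>?S. rot' y = rot y" using d fstp by (auto simp: rot'_def sw_def)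
    have "(rot' ^^ n) d = d'" using agree_funpow[OF cl ag, of d n] d n by auto
    then have "d' \<in> orb rot' d" unfolding orb_def by blast
    then show "(d, d') \<in> ?R\<^sup>*" by (rule orb_in_rtrancl[OF rot'cl d(1)])
  qed
  have rot_back: "rot' \<circ> sw p q = rot" by (rule ext) (simp add: rot'_def)
  have qnot: "q \<notin> orb rot' p" using split_not_orb[OF finA rot_bij pA qA pq qp] rot'_def by simp
  have orbsplit: "orb rot p = orb rot' p \<union> orb rot' q"
    using merge_orb(1)[OF finA rot'bij pA qA qnot] rot_back by simp
  have qp_R: "(q, p) \<in> ?R\<^sup>*"
  proof -
    have "(p, swp p) \<in> ?R\<^sup>*" using Rswp pA by blast
    moreover have "(swp p, swp q) \<in> ?R\<^sup>*"
      using walk_darts[OF Rswp same xs(1) swp_in[OF pA] _ swp_in[OF qA]] xs sp by simp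
    moreover have "(swp q, q) \<in> ?R\<^sup>*" using rtrancl_sym[OF symR] Rswp qA by blast
    ultimately have "(p, q) \<in> ?R\<^sup>*" by (meson rtrancl_trans)
    then show ?thesis by (rule rtrancl_sym[OF symR])
  qed
  have atv: "\<forall>d\<in>A. fst d = v \<longrightarrow> (d, p) \<in> ?R\<^sup>*"
  proof (intro ballI impI)
    fix d assume d: "d \<in> A" "fst d = v"
    then have "d \<in> orb rot p" using orb_rot[OF pA] fstp by simp
    then have "d \<in> orb rot' p \<or> d \<in> orb rot' q" using orbsplit by simp
    then show "(d, p) \<in> ?R\<^sup>*"
    proof
      assume "d \<in> orb rot' p"
      then show ?thesis using orb_in_rtrancl[OF rot'cl pA] rtrancl_sym[OF symR] by blast
    next
      assume "d \<in> orb rot' q"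
      then have "(q, d) \<in> ?R\<^sup>*" using orb_in_rtrancl[OF rot'cl qA] by blast
      then show ?thesis using rtrancl_sym[OF symR] qp_R by (meson rtrancl_trans)
    qed
  qed
  have allR: "\<forall>x\<in>A. (x, p) \<in> ?R\<^sup>*"
  proof
    fix x assume x: "x \<in> A"
    have "fst x \<in> V" using AV x by (cases x) auto
    moreover have "v \<in> V" using AV avA by auto
    ultimately obtain ys where ys: "walk_in V A ys" "hd ys = fst x" "last ys = v"
      using conn unfolding connected_on_def by blast
    have "\<And>d. walk_in V A ys \<Longrightarrow> last ys = v \<Longrightarrow> d \<in> A \<Longrightarrow> fst d = hd ys \<Longrightarrow> (d, p) \<in> ?R\<^sup>*"
    proof (induct ys)
      case Nil then show ?case by (simp add: walk_in_def)
    next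
      case (Cons y ys)
      show ?case
      proof (cases "y = v")
        case True then show ?thesis using atv Cons.prems by auto
      next
        case False
        then have ys: "ys \<noteq> []" using Cons.prems by auto
        then obtain z zs where z: "ys = z # zs" by (cases ys) auto
        have yz: "(y, z) \<in> A" using Cons.prems(1) z unfolding walk_in_def by force
        have wys: "walk_in V A ys" by (rule walk_in_tl[OF Cons.prems(1) ys])
        have yV: "y \<in> V" using Cons.prems(1) unfolding walk_in_def by simp
        have "(d, (y, z)) \<in> ?R\<^sup>*" using same Cons.prems yz yV False by auto
        moreover have "((y, z), (z, y)) \<in> ?R\<^sup>*" using Rswp yz by (auto simp: swp_def)
        moreover have "((z, y), p) \<in> ?R\<^sup>*"
          using Cons.hyps[OF wys] Cons.prems ys z symA[OF yz] by simp
        ultimately show ?thesis by (meson rtrancl_trans)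
      qed
    qed
    then show "(x, p) \<in> ?R\<^sup>*" using ys x by simp
  qed
  have gen: "2 * (ncyc (rot' \<circ> sM swp A) A + ncyc rot' A) \<le> 4 + card A"
    by (rule genus_connected[OF finA rot'bij sprops pA allR])
  have "a \<in> V" "v \<in> V" "a \<noteq> v" using AV avA irrA by auto
  then have noiso: "\<forall>x\<in>V. \<exists>y. (x, y) \<in> A" by (rule no_isolated)
  have euler: "int (card V) - int (card A div 2) + int (card (faces A rot)) = 2"
    using pg avA unfolding plane_graph_def by auto
  show False using gen c1 c3 ncyc_rot[OF noiso] ncyc_phi euler by simp
qed

end


lemma orb_card:
  assumes D: "finite D" "bij_betw p D D" "x \<in> D"
  defines "L \<equiv> (LEAST L. 0 < L \<and> (p ^^ L) x = x)"
  shows "orb p x = (\<lambda>k. (p ^^ k) x) ` {..<L}" "card (orb p x) = L" "0 < L" "(p ^^ L) x = x"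
proof -
  have ex: "\<exists>L>0. (p ^^ L) x = x" using period_ex[OF D] .
  show L: "0 < L" "(p ^^ L) x = x" using LeastI_ex[OF ex] unfolding L_def by auto
  have Lmin: "\<And>m. 0 < m \<Longrightarrow> m < L \<Longrightarrow> (p ^^ m) x \<noteq> x"
    using not_less_Least unfolding L_def by blast
  show o: "orb p x = (\<lambda>k. (p ^^ k) x) ` {..<L}"
  proof
    show "orb p x \<subseteq> (\<lambda>k. (p ^^ k) x) ` {..<L}"
    proof
      fix y assume "y \<in> orb p x"
      then obtain m where "y = (p ^^ m) x" unfolding orb_def by auto
      then have "y = (p ^^ (m mod L)) x" using funpow_mod_eq[OF L(2)] by simp
      then show "y \<in> (\<lambda>k. (p ^^ k) x) ` {..<L}" using L(1) by auto
    qed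
  qed (auto simp: orb_def)
  have inj: "\<And>k. inj_on (p ^^ k) D" using bij_betw_funpow[OF D(2)] bij_betw_def by blast
  have "inj_on (\<lambda>k. (p ^^ k) x) {..<L}"
  proof (rule ccontr)
    assume "\<not> inj_on (\<lambda>k. (p ^^ k) x) {..<L}"
    then obtain i j where ij: "i < L" "j < L" "i \<noteq> j" "(p ^^ i) x = (p ^^ j) x"
      unfolding inj_on_def by auto
    { fix i j assume ij: "i < j" "j < L" "(p ^^ i) x = (p ^^ j) x"
      have "(p ^^ i) ((p ^^ (j - i)) x) = (p ^^ (i + (j - i))) x" by (simp add: funpow_add)
      also have "\<dots> = (p ^^ i) x" using ij by simp
      finally have "(p ^^ (j - i)) x = x"
        using inj[of i] funpow_in_D[OF D(2,3)] D(3) unfolding inj_on_def by blast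
      then have False using Lmin[of "j - i"] ij by simp }
    then show False using ij by (metis linorder_neqE_nat)
  qed
  then show "card (orb p x) = L" using o by (simp add: card_image)
qed

context
  fixes V :: "'v set" and A :: "('v \<times> 'v) set" and rot :: "'v \<times> 'v \<Rightarrow> 'v \<times> 'v"
  assumes pg: "plane_graph V A rot"
begin

lemma tri_face:
  assumes d: "(x, c) \<in> A" and c3: "card (face_orbit rot (x, c)) = 3"
  shows "\<exists>a. rot (c, x) = (c, a) \<and> rot (a, c) = (a, x) \<and> rot (x, a) = (x, c) \<and>
     face_orbit rot (x, c) = {(x, c), (c, a), (a, x)} \<and> (c, a) \<in> A \<and> (a, x) \<in> A"
proof -
  note oc = orb_card[OF finA[OF pg] phi_bij[OF pg] d]
  define L where "L = (LEAST L. 0 < L \<and> (phi rot ^^ L) (x, c) = (x, c))"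
  have L3: "L = 3" using oc(2) c3 L_def face_orbit_orb[OF pg] by simp
  have per: "(phi rot ^^ 3) (x, c) = (x, c)" using oc(4) L3 L_def by simp
  have F: "face_orbit rot (x, c) = (\<lambda>k. (phi rot ^^ k) (x, c)) ` {..<3}"
    using oc(1) L3 L_def face_orbit_orb[OF pg] by simp
  have cx: "(c, x) \<in> A" using symA[OF pg d] .
  obtain a where a: "rot (c, x) = (c, a)" using rot_fst[OF pg cx] by (cases "rot (c, x)") auto
  have caA: "(c, a) \<in> A" using rot_in[OF pg cx] a by simp
  have acA: "(a, c) \<in> A" using symA[OF pg caA] .
  obtain b where b: "rot (a, c) = (a, b)" using rot_fst[OF pg acA] by (cases "rot (a, c)") auto
  have abA: "(a, b) \<in> A" using rot_in[OF pg acA] b by simp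
  have p1: "phi rot (x, c) = (c, a)" using a by (simp add: phi_def)
  have p2: "phi rot (c, a) = (a, b)" using b by (simp add: phi_def)
  have "(phi rot ^^ 3) (x, c) = phi rot (a, b)" using p1 p2 by (simp add: numeral_3_eq_3)
  then have p3: "rot (b, a) = (x, c)" using per by (simp add: phi_def)
  have "fst (rot (b, a)) = b" using rot_fst[OF pg symA[OF pg abA]] by simp
  then have bx: "b = x" using p3 by simp
  have "face_orbit rot (x, c) = {(x, c), (c, a), (a, x)}"
  proof -
    have "{..<3::nat} = {0, 1, 2}" by auto
    then show ?thesis unfolding F using p1 p2 bx by (simp add: numeral_2_eq_2)
  qed
  then show ?thesis using a b bx p3 caA abA by auto
qed

lemma rot_closure:
  assumes d0: "d0 \<in> A" "d0 \<in> S" and cl: "\<forall>z\<in>S. rot z \<in> S"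
    and d: "d \<in> A" "fst d = fst d0"
  shows "d \<in> S"
proof -
  obtain n where "(rot ^^ n) d0 = d" using rot_reach[OF pg d0(1) d(1)] d by auto
  moreover have "(rot ^^ n) d0 \<in> S" for n by (induct n) (use d0 cl in auto)
  ultimately show ?thesis by auto
qed

lemma rot_no_fix:
  assumes "d \<in> A" "d' \<in> A" "fst d = fst d'" "d \<noteq> d'"
  shows "rot d \<noteq> d"
proof
  assume r: "rot d = d"
  have "d' \<in> {d}" by (rule rot_closure[OF assms(1) _ _ assms(2)]) (use r assms in auto)
  then show False using assms by simp
qed

lemma face_closed:
  assumes "F \<in> faces A rot" "e \<in> F"
  shows "phi rot e \<in> F"
proof -
  obtain d where "F = face_orbit rot d" using assms unfolding faces_def by auto
  then show ?thesis using assms orb_step unfolding face_orbit_orb[OF pg] by metis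
qed

lemma face_sub: "F \<in> faces A rot \<Longrightarrow> F \<subseteq> A"
  unfolding faces_def using orb_sub_D[OF phi_bij[OF pg]] face_orbit_orb[OF pg] by auto

lemma nbr_finite: "finite {w. (v, w) \<in> A}"
proof -
  have "{w. (v, w) \<in> A} \<subseteq> V" using AV[OF pg] by auto
  then show ?thesis using finV[OF pg] finite_subset by blast
qed

lemma cut_of_two:
  assumes Out: "Out \<in> faces A rot" and av: "(a, v) \<in> Out" and bv: "(b, v) \<in> Out" and ab: "a \<noteq> b"
  shows "cut_vertex V A v"
proof -
  have "(a, v) \<in> A" "(b, v) \<in> A" using face_sub[OF Out] av bv by auto
  then have "a \<in> V - {v}" "b \<in> V - {v}" "v \<in> V" using AV[OF pg] irrA[OF pg] by auto
  then show ?thesis unfolding cut_vertex_def connected_on_def using outer_split[OF pg assms] by blast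
qed

lemma block_exists:
  assumes "(v, a) \<in> A"
  shows "\<exists>B. is_block V A B \<and> v \<in> B \<and> a \<in> B"
proof -
  let ?F = "{B. {v, a} \<subseteq> B \<and> B \<subseteq> V \<and> nonseparable B A}"
  have va: "v \<in> V" "a \<in> V" "v \<noteq> a" using AV[OF pg assms] irrA[OF pg] assms by auto
  have av: "(a, v) \<in> A" using symA[OF pg assms] .
  have "nonseparable {v, a} A"
    unfolding nonseparable_def connected_on_def
  proof (intro conjI ballI)
    fix x y assume "x \<in> {v, a}" "y \<in> {v, a}"
    then consider "x = y" | "x = v" "y = a" | "x = a" "y = v" by auto
    then show "\<exists>xs. walk_in {v, a} A xs \<and> hd xs = x \<and> last xs = y"
    proof cases
      case 1 then show ?thesis using \<open>x \<in> {v, a}\<close> by (intro exI[of _ "[x]"]) (auto simp: walk_in_def)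
    next
      case 2 then show ?thesis using assms by (intro exI[of _ "[v, a]"]) (auto simp: walk_in_def less_Suc_eq)
    next
      case 3 then show ?thesis using av by (intro exI[of _ "[a, v]"]) (auto simp: walk_in_def less_Suc_eq)
    qed
  next
    fix z x y assume "z \<in> {v, a}" "x \<in> {v, a} - {z}" "y \<in> {v, a} - {z}"
    then have "x = y" by auto
    then show "\<exists>xs. walk_in ({v, a} - {z}) A xs \<and> hd xs = x \<and> last xs = y"
      using \<open>x \<in> {v, a} - {z}\<close> by (intro exI[of _ "[x]"]) (auto simp: walk_in_def)
  qed
  then have ne: "{v, a} \<in> ?F" using va by auto
  have finF: "finite ?F" using finV[OF pg] by (rule rev_finite_subset[OF finite_Collect_subsets]) auto
  have bnd: "\<forall>B. B \<in> ?F \<longrightarrow> card B < Suc (card V)"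
  proof (intro allI impI)
    fix B assume "B \<in> ?F"
    then have "card B \<le> card V" using finV[OF pg] card_mono by blast
    then show "card B < Suc (card V)" by simp
  qed
  have "\<exists>B. B \<in> ?F \<and> (\<forall>y. y \<in> ?F \<longrightarrow> card y \<le> card B)"
    by (rule ex_has_greatest_nat[of "\<lambda>B. B \<in> ?F" "{v, a}" card "Suc (card V)", OF ne bnd])
  then obtain B where B1: "B \<in> ?F" and B2: "\<forall>y. y \<in> ?F \<longrightarrow> card y \<le> card B"
    by (elim exE conjE)
  note B = B1 B2
  have "is_block V A B"
    unfolding is_block_def
  proof (intro conjI allI impI)
    show "B \<subseteq> V" "nonseparable B A" using B by auto
    have "card {v, a} \<le> card B" using B ne by blast
    then show "2 \<le> card B" using va by simp
    fix B' assume B': "B \<subset> B' \<and> B' \<subseteq> V"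
    show "\<not> nonseparable B' A"
    proof
      assume "nonseparable B' A"
      then have "B' \<in> ?F" using B B' by auto
      then have "card B' \<le> card B" using B by blast
      moreover have "card B < card B'" using B' finV[OF pg] by (meson psubset_card_mono rev_finite_subset)
      ultimately show False by simp
    qed
  qed
  then show ?thesis using B by auto
qed

lemma three_blocks:
  assumes a: "(v, a) \<in> A" "(v, b) \<in> A" "(v, c) \<in> A"
    and nab: "\<not> (\<exists>xs. walk_in (V - {v}) A xs \<and> hd xs = a \<and> last xs = b)"
    and nac: "\<not> (\<exists>xs. walk_in (V - {v}) A xs \<and> hd xs = a \<and> last xs = c)"
    and nbc: "\<not> (\<exists>xs. walk_in (V - {v}) A xs \<and> hd xs = b \<and> last xs = c)"
  shows "3 \<le> card {B. is_block V A B \<and> v \<in> B}"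
proof -
  obtain Ba where Ba: "is_block V A Ba" "v \<in> Ba" "a \<in> Ba" using block_exists[OF a(1)] by blast
  obtain Bb where Bb: "is_block V A Bb" "v \<in> Bb" "b \<in> Bb" using block_exists[OF a(2)] by blast
  obtain Bc where Bc: "is_block V A Bc" "v \<in> Bc" "c \<in> Bc" using block_exists[OF a(3)] by blast
  have nv: "a \<noteq> v" "b \<noteq> v" "c \<noteq> v" using a irrA[OF pg] by auto
  have sep: "B1 \<noteq> B2" if "is_block V A B1" "v \<in> B1" "x \<in> B1" "is_block V A B2" "y \<in> B2"
     "x \<noteq> v" "y \<noteq> v" "\<not> (\<exists>xs. walk_in (V - {v}) A xs \<and> hd xs = x \<and> last xs = y)" for B1 B2 x y
  proof
    assume "B1 = B2"
    have ns: "nonseparable B1 A" using that(1) by (simp add: is_block_def)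
    have "connected_on (B1 - {v}) A" using ns that(2) unfolding nonseparable_def by blast
    moreover have "x \<in> B1 - {v}" "y \<in> B1 - {v}" using that \<open>B1 = B2\<close> by auto
    ultimately obtain xs where "walk_in (B1 - {v}) A xs" "hd xs = x" "last xs = y"
      unfolding connected_on_def by blast
    moreover have "B1 - {v} \<subseteq> V - {v}" using that(1) unfolding is_block_def by auto
    ultimately have "walk_in (V - {v}) A xs" unfolding walk_in_def by auto
    then show False using that \<open>hd xs = x\<close> \<open>last xs = y\<close> by blast
  qed
  have d: "Ba \<noteq> Bb" "Ba \<noteq> Bc" "Bb \<noteq> Bc"
    using sep[OF Ba(1,2,3) Bb(1,3) nv(1,2) nab] sep[OF Ba(1,2,3) Bc(1,3) nv(1,3) nac]
      sep[OF Bb(1,2,3) Bc(1,3) nv(2,3) nbc] by auto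
  have "{Ba, Bb, Bc} \<subseteq> {B. is_block V A B \<and> v \<in> B}" using Ba Bb Bc by auto
  moreover have "finite {B. is_block V A B \<and> v \<in> B}"
    using finV[OF pg] by (rule rev_finite_subset[OF finite_Collect_subsets]) (auto simp: is_block_def)
  ultimately have "card {Ba, Bb, Bc} \<le> card {B. is_block V A B \<and> v \<in> B}" by (rule card_mono[rotated])
  then show ?thesis using d by simp
qed

end


lemma is_walk_single[simp]: "is_walk A [x]" by (simp add: is_walk_def)

lemma is_walk_Cons2[simp]: "is_walk A (x # y # xs) \<longleftrightarrow> (x, y) \<in> A \<and> is_walk A (y # xs)"
proof
  assume a: "is_walk A (x # y # xs)"
  then have "(x, y) \<in> A" unfolding is_walk_def by force
  moreover have "is_walk A (y # xs)" unfolding is_walk_def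
  proof (intro conjI allI impI)
    fix i assume "Suc i < length (y # xs)"
    then have "((x # y # xs) ! Suc i, (x # y # xs) ! Suc (Suc i)) \<in> A"
      using a unfolding is_walk_def by (metis Suc_less_eq length_Cons)
    then show "((y # xs) ! i, (y # xs) ! Suc i) \<in> A" by simp
  qed simp
  ultimately show "(x, y) \<in> A \<and> is_walk A (y # xs)" by simp
next
  assume a: "(x, y) \<in> A \<and> is_walk A (y # xs)"
  show "is_walk A (x # y # xs)" unfolding is_walk_def
  proof (intro conjI allI impI)
    fix i assume i: "Suc i < length (x # y # xs)"
    show "((x # y # xs) ! i, (x # y # xs) ! Suc i) \<in> A"
    proof (cases i)
      case 0 then show ?thesis using a by simp
    next
      case (Suc j)
      then have "Suc j < length (y # xs)" using i by simp
      then have "((y # xs) ! j, (y # xs) ! Suc j) \<in> A" using a unfolding is_walk_def by blast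
      then show ?thesis using Suc by simp
    qed
  qed simp
qed

lemma dist_le:
  assumes "is_walk A xs" "hd xs = u" "last xs = w"
  shows "dist A u w \<le> length xs - 1"
proof -
  have "length xs = Suc (length xs - 1)" using assms(1) unfolding is_walk_def by (cases xs) auto
  then show ?thesis unfolding dist_def using assms by (intro Least_le) blast
qed

lemma dist_walk:
  assumes "is_walk A xs" "hd xs = u" "last xs = w"
  shows "\<exists>ys. is_walk A ys \<and> hd ys = u \<and> last ys = w \<and> length ys = Suc (dist A u w)"
proof -
  have "length xs = Suc (length xs - 1)" using assms(1) unfolding is_walk_def by (cases xs) auto
  then have ex: "\<exists>n. \<exists>xs. is_walk A xs \<and> hd xs = u \<and> last xs = w \<and> length xs = Suc n"
    using assms by blast
  show ?thesis using LeastI_ex[OF ex] unfolding dist_def by blast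
qed

lemma walk_in_is_walk: "walk_in S A xs \<Longrightarrow> is_walk A xs"
  unfolding walk_in_def is_walk_def by simp

lemma ex_less_3: "(\<exists>i<(3::nat). P i) \<longleftrightarrow> P 0 \<or> P 1 \<or> P 2"
  by (auto simp: less_Suc_eq eval_nat_numeral)
lemma ex_less_4: "(\<exists>i<(4::nat). P i) \<longleftrightarrow> P 0 \<or> P 1 \<or> P 2 \<or> P 3"
  by (auto simp: less_Suc_eq eval_nat_numeral)
lemma ex_less_5: "(\<exists>i<(5::nat). P i) \<longleftrightarrow> P 0 \<or> P 1 \<or> P 2 \<or> P 3 \<or> P 4"
  by (auto simp: less_Suc_eq eval_nat_numeral)
lemma all_less_5: "(\<forall>i<(5::nat). P i) \<longleftrightarrow> P 0 \<and> P 1 \<and> P 2 \<and> P 3 \<and> P 4"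
  by (auto simp: less_Suc_eq eval_nat_numeral)
lemma all_less_4: "(\<forall>i<(4::nat). P i) \<longleftrightarrow> P 0 \<and> P 1 \<and> P 2 \<and> P 3"
  by (auto simp: less_Suc_eq eval_nat_numeral)
lemma all_less_3: "(\<forall>i<(3::nat). P i) \<longleftrightarrow> P 0 \<and> P 1 \<and> P 2"
  by (auto simp: less_Suc_eq eval_nat_numeral)

lemma side_mem_T:
  assumes i: "i < length cs" and c: "c = cs ! i" and nx: "nx = cs ! ((i + 1) mod length cs)"
    and pv: "pv = cs ! ((i + length cs - 1) mod length cs)"
    and r: "rotG (c, nx) = (c, y)" and ypv: "y \<noteq> pv" and y: "y \<in> VG" "y \<notin> set cs" "(c, y) \<in> AG"
    and nxpv: "nx \<noteq> pv"
  shows "y \<in> cycle_side VG AG rotG cs True"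
proof -
  have "rot_between rotG (c, nx) (c, pv) (c, y)"
    unfolding rot_between_def
  proof (intro exI[of _ 1] conjI allI impI)
    fix k :: nat assume "k \<le> 1"
    then have "k = 0 \<or> k = 1" by auto
    then show "(rotG ^^ k) (c, nx) \<noteq> (c, pv)" using nxpv ypv r by auto
  qed (use r in auto)
  moreover have "walk_in (VG - set cs) AG [y]" using y by (simp add: walk_in_def)
  ultimately show ?thesis unfolding cycle_side_def Let_def using i c nx pv y
    by (intro CollectI conjI exI[of _ i] bexI) (auto intro!: exI[of _ y] exI[of _ "[y]"])
qed

lemma side_mem_F:
  assumes i: "i < length cs" and c: "c = cs ! i" and nx: "nx = cs ! ((i + 1) mod length cs)"
    and pv: "pv = cs ! ((i + length cs - 1) mod length cs)"
    and r: "rotG (c, pv) = (c, y)" and ynx: "y \<noteq> nx" and y: "y \<in> VG" "y \<notin> set cs" "(c, y) \<in> AG"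
    and nxpv: "nx \<noteq> pv"
  shows "y \<in> cycle_side VG AG rotG cs False"
proof -
  have "rot_between rotG (c, pv) (c, nx) (c, y)"
    unfolding rot_between_def
  proof (intro exI[of _ 1] conjI allI impI)
    fix k :: nat assume "k \<le> 1"
    then have "k = 0 \<or> k = 1" by auto
    then show "(rotG ^^ k) (c, pv) \<noteq> (c, nx)" using nxpv ynx r by auto
  qed (use r in auto)
  moreover have "walk_in (VG - set cs) AG [y]" using y by (simp add: walk_in_def)
  ultimately show ?thesis unfolding cycle_side_def Let_def using i c nx pv y
    by (intro CollectI conjI exI[of _ i] bexI) (auto intro!: exI[of _ y] exI[of _ "[y]"])
qed

lemma side_sub: "cycle_side VG AG rotG cs b \<subseteq> VG"
  unfolding cycle_side_def by auto

locale LM =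
  fixes V :: "'v set" and A :: "('v \<times> 'v) set" and rot :: "'v \<times> 'v \<Rightarrow> 'v \<times> 'v"
    and Out :: "('v \<times> 'v) set" and \<delta> :: "'v \<Rightarrow> nat"
    and VG :: "'w set" and AG :: "('w \<times> 'w) set" and rotG :: "'w \<times> 'w \<Rightarrow> 'w \<times> 'w"
    and f :: "'v \<Rightarrow> 'w"
  assumes conf: "configuration V A rot Out \<delta>"
    and tri: "triangulation VG AG rotG"
    and cont: "contains_via V A rot Out \<delta> VG AG rotG f"
begin

lemma Zpg: "plane_graph V A rot" using conf unfolding configuration_def near_triangulation_def by simp
lemma Gpg: "plane_graph VG AG rotG" using tri unfolding triangulation_def by simp
lemma Zinner: "F \<in> faces A rot \<Longrightarrow> F \<noteq> Out \<Longrightarrow> card F = 3"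
  using conf unfolding configuration_def near_triangulation_def by simp
lemma Gface: "F \<in> faces AG rotG \<Longrightarrow> card F = 3" using tri unfolding triangulation_def by simp
lemma Outface: "A \<noteq> {} \<Longrightarrow> Out \<in> faces A rot"
  using conf unfolding configuration_def near_triangulation_def by auto
lemma finj: "inj_on f V" using cont unfolding contains_via_def by simp
lemma fV: "v \<in> V \<Longrightarrow> f v \<in> VG" using cont unfolding contains_via_def by auto
lemma fA: "(u, w) \<in> A \<Longrightarrow> (f u, f w) \<in> AG" using cont unfolding contains_via_def by auto
lemma fface: "F \<in> faces A rot \<Longrightarrow> F \<noteq> Out \<Longrightarrow> map_prod f f ` F \<in> faces AG rotG"
  using cont unfolding contains_via_def by auto
lemma fdeg: "v \<in> V \<Longrightarrow> deg AG (f v) = \<delta> v" using cont unfolding contains_via_def by auto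
lemma fcut: "v \<in> V \<Longrightarrow> cut_vertex V A v \<Longrightarrow> (f v, a) \<in> AG - map_prod f f ` A \<Longrightarrow>
    (f v, b) \<in> AG - map_prod f f ` A \<Longrightarrow> a \<noteq> b \<Longrightarrow> rotG (f v, a) \<noteq> (f v, b)"
  using cont unfolding contains_via_def by blast
lemma inner_deg: "v \<in> V \<Longrightarrow> v \<notin> outer_vertices V A Out \<Longrightarrow> \<delta> v = deg A v"
  using conf unfolding configuration_def by simp
lemma outer_deg: "v \<in> V \<Longrightarrow> v \<in> outer_vertices V A Out \<Longrightarrow> \<delta> v > deg A v"
  using conf unfolding configuration_def by simp
lemma cut_props: "v \<in> V \<Longrightarrow> cut_vertex V A v \<Longrightarrow>
    card {B. is_block V A B \<and> v \<in> B} = 2 \<and> \<delta> v = deg A v + 2"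
  using conf unfolding configuration_def by simp

lemma finj_eq: "u \<in> V \<Longrightarrow> w \<in> V \<Longrightarrow> f u = f w \<longleftrightarrow> u = w"
  using finj unfolding inj_on_def by blast

lemma ZAV: "(u, w) \<in> A \<Longrightarrow> u \<in> V \<and> w \<in> V" using AV[OF Zpg] .
lemma GAV: "(u, w) \<in> AG \<Longrightarrow> u \<in> VG \<and> w \<in> VG" using AV[OF Gpg] .
lemma Zsym: "(u, w) \<in> A \<Longrightarrow> (w, u) \<in> A" using symA[OF Zpg] .
lemma Gsym: "(u, w) \<in> AG \<Longrightarrow> (w, u) \<in> AG" using symA[OF Gpg] .
lemma Zirr: "(u, u) \<notin> A" using irrA[OF Zpg] .
lemma Girr: "(u, u) \<notin> AG" using irrA[OF Gpg] .

lemma KL: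
  assumes xc: "(x, c) \<in> A" and ne: "face_orbit rot (x, c) \<noteq> Out"
  shows "\<exists>a. rot (c, x) = (c, a) \<and> (a, x) \<in> A \<and> (c, a) \<in> A \<and> rotG (f c, f x) = (f c, f a)"
proof -
  have F: "face_orbit rot (x, c) \<in> faces A rot" using xc unfolding faces_def by auto
  then have "card (face_orbit rot (x, c)) = 3" using Zinner ne by simp
  from tri_face[OF Zpg xc this] obtain a where a: "rot (c, x) = (c, a)"
    "face_orbit rot (x, c) = {(x, c), (c, a), (a, x)}" "(c, a) \<in> A" "(a, x) \<in> A" by blast
  have F': "map_prod f f ` face_orbit rot (x, c) \<in> faces AG rotG" using fface[OF F ne] .
  have img: "map_prod f f ` face_orbit rot (x, c) = {(f x, f c), (f c, f a), (f a, f x)}"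
    using a(2) by simp
  have "(f x, f c) \<in> map_prod f f ` face_orbit rot (x, c)" using img by simp
  then have "phi rotG (f x, f c) \<in> map_prod f f ` face_orbit rot (x, c)"
    by (rule face_closed[OF Gpg F'])
  then have r: "rotG (f c, f x) \<in> {(f x, f c), (f c, f a), (f a, f x)}" using img by (simp add: phi_def)
  have cxG: "(f c, f x) \<in> AG" using fA[OF Zsym[OF xc]] .
  have fst: "fst (rotG (f c, f x)) = f c" using rot_fst[OF Gpg cxG] by simp
  have V3: "x \<in> V" "c \<in> V" "a \<in> V" using ZAV xc a(3) by auto
  have "x \<noteq> c" "a \<noteq> c" using xc a(3) Zirr by auto
  then have "f x \<noteq> f c" "f a \<noteq> f c" using finj_eq V3 by auto
  then have "rotG (f c, f x) = (f c, f a)" using r fst by auto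
  then show ?thesis using a by blast
qed

definition Zd :: "'v \<Rightarrow> ('w \<times> 'w) set" where
  "Zd v = {(f v, f t) | t. (v, t) \<in> A}"

lemma OA:
  assumes vt: "(v, t) \<in> A" and r: "rotG (f v, f t) \<notin> Zd v"
  shows "(t, v) \<in> Out"
proof (rule ccontr)
  assume "(t, v) \<notin> Out"
  moreover have "(t, v) \<in> face_orbit rot (t, v)" unfolding face_orbit_def by (auto intro: exI[of _ 0])
  ultimately have "face_orbit rot (t, v) \<noteq> Out" by auto
  from KL[OF Zsym[OF vt] this] obtain a where "(v, a) \<in> A" "rotG (f v, f t) = (f v, f a)" by blast
  then show False using r unfolding Zd_def by auto
qed

lemma Out_sub: "Out \<subseteq> A"
proof (cases "A = {}")
  case True
  then show ?thesis using conf unfolding configuration_def near_triangulation_def faces_def by auto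
next
  case False
  then show ?thesis using face_sub[OF Zpg Outface] by simp
qed

lemma Out_outer:
  assumes "(w, v) \<in> Out"
  shows "v \<in> outer_vertices V A Out" "w \<in> outer_vertices V A Out" "v \<in> V" "w \<in> V"
proof -
  have A: "A \<noteq> {}" "(w, v) \<in> A" using assms Out_sub by auto
  have "phi rot (w, v) \<in> Out" using face_closed[OF Zpg Outface[OF A(1)] assms] .
  moreover have "fst (phi rot (w, v)) = v" using rot_fst[OF Zpg Zsym[OF A(2)]] by (simp add: phi_def)
  ultimately have "v \<in> fst ` Out" by (metis image_eqI)
  moreover have "w \<in> fst ` Out" using assms by (metis fst_conv image_eqI)
  ultimately show "v \<in> outer_vertices V A Out" "w \<in> outer_vertices V A Out"
    unfolding outer_vertices_def using A by auto
  show "v \<in> V" "w \<in> V" using ZAV A by auto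
qed

definition N :: "'v \<Rightarrow> 'w set" where
  "N v = {y. (f v, y) \<in> AG} - f ` {t. (v, t) \<in> A}"

lemma N_card:
  assumes v: "v \<in> V"
  shows "card (N v) = \<delta> v - deg A v"
proof -
  have sub: "f ` {t. (v, t) \<in> A} \<subseteq> {y. (f v, y) \<in> AG}" using fA by auto
  have fin: "finite {y. (f v, y) \<in> AG}" using nbr_finite[OF Gpg] .
  have "inj_on f {t. (v, t) \<in> A}" using finj ZAV by (auto intro: inj_on_subset)
  then have "card (f ` {t. (v, t) \<in> A}) = deg A v" unfolding deg_def by (simp add: card_image)
  moreover have "card {y. (f v, y) \<in> AG} = \<delta> v" using fdeg[OF v] unfolding deg_def by simp
  ultimately show ?thesis unfolding N_def using card_Diff_subset[OF finite_subset[OF sub fin] sub] by simp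
qed

lemma N_in: "g \<in> N v \<Longrightarrow> (f v, g) \<in> AG \<and> g \<notin> f ` {t. (v, t) \<in> A}"
  unfolding N_def by auto

lemma N_notimg:
  assumes "g \<in> N v" "v \<in> V" shows "(f v, g) \<notin> map_prod f f ` A"
proof
  assume "(f v, g) \<in> map_prod f f ` A"
  then obtain x y where xy: "(x, y) \<in> A" "f v = f x" "g = f y" by auto
  then have "x = v" using finj_eq ZAV assms(2) by blast
  then show False using xy assms(1) unfolding N_def by auto
qed

lemma N_notZd: "g \<in> N v \<Longrightarrow> (f v, g) \<notin> Zd v"
  unfolding N_def Zd_def by auto

lemma Zd_AG: "z \<in> Zd v \<Longrightarrow> z \<in> AG" unfolding Zd_def using fA by auto

lemma exists_out_angle:
  assumes v: "v \<in> V" and g: "g \<in> N v" and t0: "(v, t0) \<in> A"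
  shows "\<exists>t. (v, t) \<in> A \<and> rotG (f v, f t) \<notin> Zd v"
proof (rule ccontr)
  assume "\<not> ?thesis"
  then have cl: "\<forall>z\<in>Zd v. rotG z \<in> Zd v" unfolding Zd_def by auto
  have d0: "(f v, f t0) \<in> AG" "(f v, f t0) \<in> Zd v" using fA[OF t0] t0 unfolding Zd_def by auto
  have "(f v, g) \<in> Zd v" by (rule rot_closure[OF Gpg d0 cl]) (use N_in[OF g] in auto)
  then show False using N_notZd[OF g] by simp
qed

lemma ZK2:
  assumes v: "v \<in> V" and vu: "(v, u) \<in> A" and vw: "(v, w) \<in> A" and uw: "(u, w) \<notin> A" and ne: "u \<noteq> w"
    and r: "rotG (f v, f w) = (f v, f u)"
  shows False
proof (cases "face_orbit rot (w, v) = Out")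
  case False
  from KL[OF Zsym[OF vw] False] obtain a where a: "(a, w) \<in> A" "rotG (f v, f w) = (f v, f a)" by blast
  then have "f a = f u" using r by simp
  then have "a = u" using finj_eq ZAV a(1) vu by blast
  then show False using a uw by simp
next
  case True
  have wvO: "(w, v) \<in> Out" using True unfolding face_orbit_def by (auto intro: exI[of _ 0])
  have "\<delta> v > deg A v" using outer_deg[OF v Out_outer(1)[OF wvO]] .
  then have "card (N v) > 0" using N_card[OF v] by simp
  then obtain g where g: "g \<in> N v" by (metis card_gt_0_iff ex_in_conv)
  obtain t where t: "(v, t) \<in> A" "rotG (f v, f t) \<notin> Zd v" using exists_out_angle[OF v g vu] by blast
  have tvO: "(t, v) \<in> Out" using OA[OF t] .
  have rZ: "rotG (f v, f w) \<in> Zd v" using r vu unfolding Zd_def by auto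
  have tw: "t \<noteq> w" using t rZ by auto
  have Anz: "A \<noteq> {}" using vu by auto
  have cut: "cut_vertex V A v" using cut_of_two[OF Zpg Outface[OF Anz] tvO wvO tw] .
  have cp: "card {B. is_block V A B \<and> v \<in> B} = 2" "\<delta> v = deg A v + 2" using cut_props[OF v cut] by auto
  have "card (N v) = 2" using N_card[OF v] cp by simp
  then obtain g1 g2 where gg: "N v = {g1, g2}" "g1 \<noteq> g2" by (meson card_2_iff)
  have pred: "\<exists>t. (v, t) \<in> A \<and> rotG (f v, f t) = (f v, g) \<and> t \<noteq> w \<and> (t, v) \<in> Out"
    if g: "g \<in> N v" for g
  proof -
    have vwG: "(f v, f w) \<in> AG" using fA[OF vw] .
    have gA: "(f v, g) \<in> AG" using N_in[OF g] by simp
    obtain n where n: "(rotG ^^ n) (f v, f w) = (f v, g)" using rot_reach[OF Gpg vwG gA] by auto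
    have "g \<noteq> f w" using N_in[OF g] vw by auto
    then have "n \<noteq> 0" using n by (cases n) auto
    then obtain m where m: "n = Suc m" by (cases n) auto
    define h where "h = (rotG ^^ m) (f v, f w)"
    have h: "h \<in> AG" "fst h = f v" using rot_funpow[OF Gpg vwG] h_def by auto
    have rh: "rotG h = (f v, g)" using n m h_def by simp
    obtain y where y: "h = (f v, y)" using h by (cases h) auto
    have "y \<notin> N v"
    proof
      assume yN: "y \<in> N v"
      show False
      proof (cases "y = g")
        case True
        then have "rotG (f v, g) = (f v, g)" using rh y by simp
        moreover have "(f v, g) \<noteq> (f v, f w)" using \<open>g \<noteq> f w\<close> by simp
        ultimately show False using rot_no_fix[OF Gpg gA vwG] by simp
      next
        case False
        have "(f v, y) \<in> AG - map_prod f f ` A" using N_notimg[OF yN v] h y by auto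
        moreover have "(f v, g) \<in> AG - map_prod f f ` A" using N_notimg[OF g v] gA by auto
        ultimately have "rotG (f v, y) \<noteq> (f v, g)" using fcut[OF v cut] False by blast
        then show False using rh y by simp
      qed
    qed
    then have "y \<in> f ` {t. (v, t) \<in> A}" using h y unfolding N_def by auto
    then obtain t where t: "(v, t) \<in> A" "y = f t" by auto
    have "rotG (f v, f t) \<notin> Zd v" using rh y t N_notZd[OF g] by simp
    then have "(t, v) \<in> Out" using OA t by blast
    moreover have "t \<noteq> w" using rh y t r N_in[OF g] vu by auto
    ultimately show ?thesis using t rh y by blast
  qed
  obtain t1 where t1: "(v, t1) \<in> A" "rotG (f v, f t1) = (f v, g1)" "t1 \<noteq> w" "(t1, v) \<in> Out"
    using pred gg by blast
  obtain t2 where t2: "(v, t2) \<in> A" "rotG (f v, f t2) = (f v, g2)" "t2 \<noteq> w" "(t2, v) \<in> Out"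
    using pred gg by blast
  have t12: "t1 \<noteq> t2" using t1 t2 gg by auto
  have "3 \<le> card {B. is_block V A B \<and> v \<in> B}"
    by (rule three_blocks[OF Zpg vw t1(1) t2(1)])
       (use outer_split[OF Zpg Outface[OF Anz]] wvO t1 t2 t12 in \<open>auto\<close>)
  then show False using cp by simp
qed

end


context LM
begin

lemma G_tri:
  assumes "(x, c) \<in> AG"
  shows "\<exists>a. rotG (c, x) = (c, a) \<and> rotG (a, c) = (a, x) \<and> rotG (x, a) = (x, c) \<and> (c, a) \<in> AG \<and> (a, x) \<in> AG"
proof -
  have "face_orbit rotG (x, c) \<in> faces AG rotG" using assms unfolding faces_def by auto
  then have "card (face_orbit rotG (x, c)) = 3" by (rule Gface)
  from tri_face[OF Gpg assms this] show ?thesis by blast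
qed

lemma G_step:
  assumes cnx: "(c, nx) \<in> AG" and cpv: "(c, pv) \<in> AG" and pvnx: "(pv, nx) \<notin> AG" and ne: "nx \<noteq> pv"
    and r: "rotG (c, nx) = (c, y)"
  shows "y \<noteq> pv \<and> y \<noteq> nx \<and> y \<noteq> c \<and> (c, y) \<in> AG \<and> y \<in> VG"
proof -
  have cy: "(c, y) \<in> AG" using rot_in[OF Gpg cnx] r by simp
  have "y \<noteq> nx" using rot_no_fix[OF Gpg cnx cpv] ne r by auto
  moreover have "y \<noteq> c" using cy Girr by auto
  moreover have "y \<noteq> pv"
  proof
    assume "y = pv"
    obtain a where a: "rotG (c, nx) = (c, a)" "rotG (a, c) = (a, nx)" "(a, nx) \<in> AG"
      using G_tri[OF Gsym[OF cnx]] by blast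
    then have "a = pv" using r \<open>y = pv\<close> by simp
    then show False using a pvnx by simp
  qed
  ultimately show ?thesis using cy GAV by auto
qed

lemma tri_at:
  assumes cnx: "(c, nx) \<in> AG" and r: "rotG (c, nx) = (c, x)"
  shows "rotG (x, c) = (x, nx) \<and> rotG (nx, x) = (nx, c) \<and> (x, c) \<in> AG \<and> (nx, x) \<in> AG"
proof -
  obtain a where a: "rotG (c, nx) = (c, a)" "rotG (a, c) = (a, nx)" "rotG (nx, a) = (nx, c)"
    "(c, a) \<in> AG" "(a, nx) \<in> AG"
    using G_tri[OF Gsym[OF cnx]] by blast
  then have "a = x" using r by simp
  then show ?thesis using a Gsym by auto
qed

lemma noncut_contra:
  assumes v: "v \<in> V" and vpr: "(v, pr) \<in> A" and vnx: "(v, nx) \<in> A"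
    and r1: "rotG (f v, f nx) = (f v, x)" and r2: "rotG (f v, x) = (f v, f pr)"
    and x: "x \<notin> f ` V" and vx: "(f v, x) \<in> AG" and O: "(nx, v) \<in> Out"
    and nc: "\<not> cut_vertex V A v" and dg: "deg A v + 2 \<le> \<delta> v"
  shows False
proof -
  have c2: "2 \<le> card (N v)" using N_card[OF v] dg by simp
  have xN: "x \<in> N v" unfolding N_def using vx x ZAV by auto
  have "N v - {x} \<noteq> {}"
  proof
    assume "N v - {x} = {}"
    then have "N v \<subseteq> {x}" by auto
    then have "card (N v) \<le> 1" using card_mono[of "{x}" "N v"] by simp
    then show False using c2 by simp
  qed
  then obtain g where g: "g \<in> N v" "g \<noteq> x" by auto
  have "\<exists>t. (v, t) \<in> A \<and> t \<noteq> nx \<and> rotG (f v, f t) \<notin> Zd v"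
  proof (rule ccontr)
    assume na: "\<not> ?thesis"
    let ?S = "Zd v \<union> {(f v, x)}"
    have cl: "\<forall>z\<in>?S. rotG z \<in> ?S"
    proof
      fix z assume z: "z \<in> ?S"
      show "rotG z \<in> ?S"
      proof (cases "z = (f v, x)")
        case True then show ?thesis using r2 vpr unfolding Zd_def by auto
      next
        case False
        then obtain t where t: "z = (f v, f t)" "(v, t) \<in> A" using z unfolding Zd_def by auto
        show ?thesis
        proof (cases "t = nx")
          case True then show ?thesis using t r1 by simp
        next
          case False then show ?thesis using na t by blast
        qed
      qed
    qed
    have "(f v, g) \<in> ?S" by (rule rot_closure[OF Gpg vx _ cl]) (use N_in[OF g(1)] in auto)
    then show False using g N_notZd[OF g(1)] by auto
  qed
  then obtain t where t: "(v, t) \<in> A" "t \<noteq> nx" "rotG (f v, f t) \<notin> Zd v" by blast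
  have tO: "(t, v) \<in> Out" using OA[OF t(1,3)] .
  have "A \<noteq> {}" using vnx by auto
  then have "cut_vertex V A v" using cut_of_two[OF Zpg Outface[OF \<open>A \<noteq> {}\<close>] O tO] t(2) by metis
  then show False using nc by simp
qed

lemma gchord:
  assumes minb: "\<forall>a\<in>V. \<forall>b\<in>V. (f a, f b) \<in> AG \<and> (a, b) \<notin> A \<longrightarrow> 4 \<le> dist A a b"
    and ab: "a \<in> V" "b \<in> V" "(a, b) \<notin> A" and w: "is_walk A xs" "hd xs = a" "last xs = b" "length xs \<le> 4"
  shows "(f a, f b) \<notin> AG"
proof
  assume "(f a, f b) \<in> AG"
  then have "4 \<le> dist A a b" using minb ab by blast
  moreover have "dist A a b \<le> length xs - 1" using dist_le[OF w(1-3)] .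
  ultimately show False using w(4) by simp
qed

lemma zadj:
  assumes minb: "\<forall>a\<in>V. \<forall>b\<in>V. (f a, f b) \<in> AG \<and> (a, b) \<notin> A \<longrightarrow> 4 \<le> dist A a b"
    and ab: "a \<in> V" "b \<in> V" "(f a, f b) \<in> AG" and w: "is_walk A xs" "hd xs = a" "last xs = b" "length xs \<le> 4"
  shows "(a, b) \<in> A"
  using gchord[OF minb ab(1,2) _ w] ab(3) by blast

end


context LM
begin

lemma K4core:
  assumes e01: "(p0, p1) \<in> A" and e12: "(p1, p2) \<in> A" and e23: "(p2, p3) \<in> A" and e34: "(p3, p4) \<in> A"
    and bad: "(f p4, f p0) \<in> AG" "(p4, p0) \<notin> A"
    and nch: "(p0, p2) \<notin> A" "(p0, p3) \<notin> A" "(p1, p3) \<notin> A" "(p1, p4) \<notin> A" "(p2, p4) \<notin> A"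
    and dst: "distinct [p0, p1, p2, p3, p4]"
    and minb: "\<forall>a\<in>V. \<forall>b\<in>V. (f a, f b) \<in> AG \<and> (a, b) \<notin> A \<longrightarrow> 4 \<le> dist A a b"
    and outer: "on_outer_boundary V A Out [p0, p1, p2, p3, p4] \<Longrightarrow>
       \<exists>i\<in>{1, 2, 3}. \<not> cut_vertex V A ([p0, p1, p2, p3, p4] ! i) \<and>
          deg A ([p0, p1, p2, p3, p4] ! i) + 2 \<le> \<delta> ([p0, p1, p2, p3, p4] ! i)"
  shows "2 \<le> card (cycle_side VG AG rotG [f p0, f p1, f p2, f p3, f p4] True)"
proof -
  have V: "p0 \<in> V" "p1 \<in> V" "p2 \<in> V" "p3 \<in> V" "p4 \<in> V" using ZAV e01 e12 e23 e34 by auto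
  define c0 where "c0 = f p0"
  define c1 where "c1 = f p1"
  define c2 where "c2 = f p2"
  define c3 where "c3 = f p3"
  define c4 where "c4 = f p4"
  note cdefs = c0_def c1_def c2_def c3_def c4_def
  have g: "(c0, c1) \<in> AG" "(c1, c2) \<in> AG" "(c2, c3) \<in> AG" "(c3, c4) \<in> AG" "(c4, c0) \<in> AG"
    using fA e01 e12 e23 e34 bad(1) cdefs by auto
  have gr: "(c1, c0) \<in> AG" "(c2, c1) \<in> AG" "(c3, c2) \<in> AG" "(c4, c3) \<in> AG" "(c0, c4) \<in> AG"
    using g Gsym by auto
  have er: "(p1, p0) \<in> A" "(p2, p1) \<in> A" "(p3, p2) \<in> A" "(p4, p3) \<in> A" using e01 e12 e23 e34 Zsym by auto
  have ch: "(c0, c2) \<notin> AG" "(c0, c3) \<notin> AG" "(c1, c3) \<notin> AG" "(c1, c4) \<notin> AG" "(c2, c4) \<notin> AG"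
  proof -
    show "(c0, c2) \<notin> AG" unfolding cdefs
      by (rule gchord[OF minb V(1,3) nch(1), of "[p0, p1, p2]"]) (use e01 e12 in auto)
    show "(c0, c3) \<notin> AG" unfolding cdefs
      by (rule gchord[OF minb V(1,4) nch(2), of "[p0, p1, p2, p3]"]) (use e01 e12 e23 in auto)
    show "(c1, c3) \<notin> AG" unfolding cdefs
      by (rule gchord[OF minb V(2,4) nch(3), of "[p1, p2, p3]"]) (use e12 e23 in auto)
    show "(c1, c4) \<notin> AG" unfolding cdefs
      by (rule gchord[OF minb V(2,5) nch(4), of "[p1, p2, p3, p4]"]) (use e12 e23 e34 in auto)
    show "(c2, c4) \<notin> AG" unfolding cdefs
      by (rule gchord[OF minb V(3,5) nch(5), of "[p2, p3, p4]"]) (use e23 e34 in auto)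
  qed
  have chr: "(c2, c0) \<notin> AG" "(c3, c0) \<notin> AG" "(c3, c1) \<notin> AG" "(c4, c1) \<notin> AG" "(c4, c2) \<notin> AG"
    using ch Gsym by blast+
  have cd: "distinct [c0, c1, c2, c3, c4]"
  proof -
    have "set [p0, p1, p2, p3, p4] \<subseteq> V" using V by auto
    then have "inj_on f (set [p0, p1, p2, p3, p4])" using finj inj_on_subset by blast
    then have "distinct (map f [p0, p1, p2, p3, p4])" using dst distinct_map by blast
    then show ?thesis unfolding cdefs by simp
  qed
  define cs where "cs = [c0, c1, c2, c3, c4]"
  define S where "S = cycle_side VG AG rotG cs True"
  have finS: "finite S" unfolding S_def by (rule finite_subset[OF side_sub finV[OF Gpg]])
  obtain y0 where r0: "rotG (c0, c1) = (c0, y0)" using rot_fst[OF Gpg g(1)] by (cases "rotG (c0, c1)") auto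
  obtain y1 where r1: "rotG (c1, c2) = (c1, y1)" using rot_fst[OF Gpg g(2)] by (cases "rotG (c1, c2)") auto
  obtain y2 where r2: "rotG (c2, c3) = (c2, y2)" using rot_fst[OF Gpg g(3)] by (cases "rotG (c2, c3)") auto
  obtain y3 where r3: "rotG (c3, c4) = (c3, y3)" using rot_fst[OF Gpg g(4)] by (cases "rotG (c3, c4)") auto
  obtain y4 where r4: "rotG (c4, c0) = (c4, y4)" using rot_fst[OF Gpg g(5)] by (cases "rotG (c4, c0)") auto
  have s0: "y0 \<noteq> c4 \<and> y0 \<noteq> c1 \<and> y0 \<noteq> c0 \<and> (c0, y0) \<in> AG \<and> y0 \<in> VG"
    by (rule G_step[OF g(1) gr(5) chr(4) _ r0]) (use cd in auto)
  have s1: "y1 \<noteq> c0 \<and> y1 \<noteq> c2 \<and> y1 \<noteq> c1 \<and> (c1, y1) \<in> AG \<and> y1 \<in> VG"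
    by (rule G_step[OF g(2) gr(1) ch(1) _ r1]) (use cd in auto)
  have s2: "y2 \<noteq> c1 \<and> y2 \<noteq> c3 \<and> y2 \<noteq> c2 \<and> (c2, y2) \<in> AG \<and> y2 \<in> VG"
    by (rule G_step[OF g(3) gr(2) ch(3) _ r2]) (use cd in auto)
  have s3: "y3 \<noteq> c2 \<and> y3 \<noteq> c4 \<and> y3 \<noteq> c3 \<and> (c3, y3) \<in> AG \<and> y3 \<in> VG"
    by (rule G_step[OF g(4) gr(3) ch(5) _ r3]) (use cd in auto)
  have s4: "y4 \<noteq> c3 \<and> y4 \<noteq> c0 \<and> y4 \<noteq> c4 \<and> (c4, y4) \<in> AG \<and> y4 \<in> VG"
    by (rule G_step[OF g(5) gr(4) chr(2) _ r4]) (use cd in auto)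
  have ns: "y0 \<notin> set cs" "y1 \<notin> set cs" "y2 \<notin> set cs" "y3 \<notin> set cs" "y4 \<notin> set cs"
    unfolding cs_def using s0 s1 s2 s3 s4 ch chr by auto
  have yS: "y0 \<in> S" "y1 \<in> S" "y2 \<in> S" "y3 \<in> S" "y4 \<in> S"
  proof -
    show "y0 \<in> S" unfolding S_def
      by (rule side_mem_T[of 0 cs c0 c1 c4 rotG y0]) (use cs_def r0 s0 ns cd in auto)
    show "y1 \<in> S" unfolding S_def
      by (rule side_mem_T[of 1 cs c1 c2 c0 rotG y1]) (use cs_def r1 s1 ns cd in auto)
    show "y2 \<in> S" unfolding S_def
      by (rule side_mem_T[of 2 cs c2 c3 c1 rotG y2]) (use cs_def r2 s2 ns cd in auto)
    show "y3 \<in> S" unfolding S_def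
      by (rule side_mem_T[of 3 cs c3 c4 c2 rotG y3]) (use cs_def r3 s3 ns cd in auto)
    show "y4 \<in> S" unfolding S_def
      by (rule side_mem_T[of 4 cs c4 c0 c3 rotG y4]) (use cs_def r4 s4 ns cd in auto)
  qed
  show ?thesis
  proof (rule ccontr)
    assume "\<not> ?thesis"
    then have "card S \<le> Suc 0" unfolding S_def cs_def cdefs by simp
    then have all: "\<forall>a\<in>S. \<forall>b\<in>S. a = b" using card_le_Suc0_iff_eq[OF finS] by simp
    define x where "x = y0"
    have yx: "y1 = x" "y2 = x" "y3 = x" "y4 = x" using all yS x_def by auto
    have t0: "rotG (x, c0) = (x, c1) \<and> rotG (c1, x) = (c1, c0) \<and> (x, c0) \<in> AG \<and> (c1, x) \<in> AG"
      using tri_at[OF g(1)] r0 x_def by simp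
    have t1: "rotG (x, c1) = (x, c2) \<and> rotG (c2, x) = (c2, c1) \<and> (x, c1) \<in> AG \<and> (c2, x) \<in> AG"
      using tri_at[OF g(2)] r1 yx by simp
    have t2: "rotG (x, c2) = (x, c3) \<and> rotG (c3, x) = (c3, c2) \<and> (x, c2) \<in> AG \<and> (c3, x) \<in> AG"
      using tri_at[OF g(3)] r2 yx by simp
    have t3: "rotG (x, c3) = (x, c4) \<and> rotG (c4, x) = (c4, c3) \<and> (x, c3) \<in> AG \<and> (c4, x) \<in> AG"
      using tri_at[OF g(4)] r3 yx by simp
    have t4: "rotG (x, c4) = (x, c0) \<and> rotG (c0, x) = (c0, c4) \<and> (x, c4) \<in> AG \<and> (c0, x) \<in> AG"
      using tri_at[OF g(5)] r4 yx by simp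
    have xcs: "x \<noteq> c0" "x \<noteq> c1" "x \<noteq> c2" "x \<noteq> c3" "x \<noteq> c4" using ns x_def cs_def by auto
    show False
    proof (cases "x \<in> f ` V")
      case True
      then obtain z where z: "z \<in> V" "x = f z" by auto
      have noiso: "\<forall>v\<in>V. \<exists>y. (v, y) \<in> A"
        by (rule no_isolated[OF Zpg V(1) V(2)]) (use e01 Zirr in auto)
      obtain z' where zz': "(z, z') \<in> A" using noiso z by auto
      have z'V: "z' \<in> V" using ZAV zz' by auto
      let ?S = "{(x, c0), (x, c1), (x, c2), (x, c3), (x, c4)}"
      have "(x, f z') \<in> ?S"
        by (rule rot_closure[OF Gpg, of "(x, c0)" ?S]) (use t0 t1 t2 t3 t4 fA[OF zz'] z in auto)
      then have "f z' \<in> {f p0, f p1, f p2, f p3, f p4}" unfolding cdefs by auto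
      then have z'p: "z' = p0 \<or> z' = p1 \<or> z' = p2 \<or> z' = p3 \<or> z' = p4" using finj_eq z'V V by auto
      have zG: "(f z, f p0) \<in> AG" "(f z, f p1) \<in> AG" "(f z, f p2) \<in> AG" "(f z, f p3) \<in> AG" "(f z, f p4) \<in> AG"
        using t0 t1 t2 t3 t4 z cdefs by auto
      have z2: "(z, p2) \<in> A"
        using z'p
      proof (elim disjE)
        assume "z' = p0" then show ?thesis
          by (intro zadj[OF minb z(1) V(3) zG(3), of "[z, p0, p1, p2]"]) (use zz' e01 e12 in auto)
      next
        assume "z' = p1" then show ?thesis
          by (intro zadj[OF minb z(1) V(3) zG(3), of "[z, p1, p2]"]) (use zz' e12 in auto)
      next
        assume "z' = p2" then show ?thesis using zz' by simp
      next
        assume "z' = p3" then show ?thesis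
          by (intro zadj[OF minb z(1) V(3) zG(3), of "[z, p3, p2]"]) (use zz' er in auto)
      next
        assume "z' = p4" then show ?thesis
          by (intro zadj[OF minb z(1) V(3) zG(3), of "[z, p4, p3, p2]"]) (use zz' er in auto)
      qed
      have z0: "(z, p0) \<in> A"
        by (intro zadj[OF minb z(1) V(1) zG(1), of "[z, p2, p1, p0]"]) (use z2 er in auto)
      have z4: "(z, p4) \<in> A"
        by (intro zadj[OF minb z(1) V(5) zG(5), of "[z, p2, p3, p4]"]) (use z2 e23 e34 in auto)
      have "dist A p4 p0 \<le> 2"
        using dist_le[of A "[p4, z, p0]" p4 p0] Zsym[OF z4] z0 by simp
      moreover have "4 \<le> dist A p4 p0" using minb V bad by blast
      ultimately show False by simp
    next
      case False
      have nZ: "\<And>v. (f v, x) \<notin> Zd v" using False ZAV unfolding Zd_def by fastforce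
      have O1: "(p1, p0) \<in> Out" using OA[OF e01] nZ r0 x_def cdefs by auto
      have O2: "(p2, p1) \<in> Out" using OA[OF e12] nZ r1 yx cdefs by auto
      have O3: "(p3, p2) \<in> Out" using OA[OF e23] nZ r2 yx cdefs by auto
      have O4: "(p4, p3) \<in> Out" using OA[OF e34] nZ r3 yx cdefs by auto
      have "on_outer_boundary V A Out [p0, p1, p2, p3, p4]"
        unfolding on_outer_boundary_def
      proof
        show "set [p0, p1, p2, p3, p4] \<subseteq> outer_vertices V A Out"
          using Out_outer[OF O1] Out_outer[OF O2] Out_outer[OF O3] Out_outer[OF O4] by auto
        show "\<forall>i. Suc i < length [p0, p1, p2, p3, p4] \<longrightarrow>
          ([p0, p1, p2, p3, p4] ! i, [p0, p1, p2, p3, p4] ! Suc i) \<in> Out \<or>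
          ([p0, p1, p2, p3, p4] ! Suc i, [p0, p1, p2, p3, p4] ! i) \<in> Out"
        proof (intro allI impI)
          fix i assume "Suc i < length [p0, p1, p2, p3, p4]"
          then have "i = 0 \<or> i = 1 \<or> i = 2 \<or> i = 3" by auto
          then show "([p0, p1, p2, p3, p4] ! i, [p0, p1, p2, p3, p4] ! Suc i) \<in> Out \<or>
            ([p0, p1, p2, p3, p4] ! Suc i, [p0, p1, p2, p3, p4] ! i) \<in> Out"
            using O1 O2 O3 O4 by (auto simp: numeral_eq_Suc)
        qed
      qed
      then obtain i where i: "i \<in> {1, 2, 3}" "\<not> cut_vertex V A ([p0, p1, p2, p3, p4] ! i)"
        "deg A ([p0, p1, p2, p3, p4] ! i) + 2 \<le> \<delta> ([p0, p1, p2, p3, p4] ! i)"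
        using outer by blast
      from i(1) show False
      proof (elim insertE)
        assume "i = 1"
        then show False
          by (intro noncut_contra[OF V(2) er(1) e12, of x]) (use i r1 yx t0 t1 False O2 cdefs in auto)
      next
        assume "i = 2"
        then show False
          by (intro noncut_contra[OF V(3) er(2) e23, of x]) (use i r2 yx t1 t2 False O3 cdefs in auto)
      next
        assume "i \<in> {}" then show False by simp
      next
        assume "i = 3"
        then show False
          by (intro noncut_contra[OF V(4) er(3) e34, of x]) (use i r3 yx t2 t3 False O4 cdefs in auto)
      qed
    qed
  qed
qed

end


definition angT :: "('w \<times> 'w) set \<Rightarrow> ('w \<times> 'w \<Rightarrow> 'w \<times> 'w) \<Rightarrow> 'w \<Rightarrow> 'w \<Rightarrow> 'w \<Rightarrow> 'w \<Rightarrow> bool" where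
  "angT AG R c nx pv y \<longleftrightarrow> (c, y) \<in> AG \<and> rot_between R (c, nx) (c, pv) (c, y)"

lemma side5:
  "cycle_side VG AG R [a, b, c, d, e] fw = {x \<in> VG - {a, b, c, d, e}. \<exists>y.
     (if fw then angT AG R a b e y \<or> angT AG R b c a y \<or> angT AG R c d b y \<or> angT AG R d e c y \<or> angT AG R e a d y
      else angT AG R a e b y \<or> angT AG R b a c y \<or> angT AG R c b d y \<or> angT AG R d c e y \<or> angT AG R e d a y) \<and>
     (\<exists>xs. walk_in (VG - {a, b, c, d, e}) AG xs \<and> hd xs = y \<and> last xs = x)}"
proof -
  have L: "length [a, b, c, d, e] = 5" by simp
  show ?thesis
    unfolding cycle_side_def Let_def L ex_less_5 angT_def
    by (cases fw) (simp_all, blast+)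
qed

lemma side_rev5:
  "cycle_side VG AG R [a, b, c, d, e] False = cycle_side VG AG R [e, d, c, b, a] True"
proof -
  have "{e, d, c, b, a} = {a, b, c, d, e}" by auto
  then show ?thesis unfolding side5 by auto
qed

lemma edges5: "(\<forall>i. Suc i < length [a, b, c, d, e] \<longrightarrow> Q ([a, b, c, d, e] ! i) ([a, b, c, d, e] ! Suc i))
   \<longleftrightarrow> Q a b \<and> Q b c \<and> Q c d \<and> Q d e"
proof -
  have "(\<forall>i. Suc i < length [a, b, c, d, e] \<longrightarrow> Q ([a, b, c, d, e] ! i) ([a, b, c, d, e] ! Suc i))
     \<longleftrightarrow> (\<forall>i<4. Q ([a, b, c, d, e] ! i) ([a, b, c, d, e] ! Suc i))" by auto
  also have "\<dots> \<longleftrightarrow> Q a b \<and> Q b c \<and> Q c d \<and> Q d e" unfolding all_less_4 by (simp add: numeral_eq_Suc)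
  finally show ?thesis .
qed

lemma outer_rev5:
  "on_outer_boundary V A Out [e, d, c, b, a] \<Longrightarrow> on_outer_boundary V A Out [a, b, c, d, e]"
  unfolding on_outer_boundary_def edges5[where Q = "\<lambda>x y. (x, y) \<in> Out \<or> (y, x) \<in> Out"]
  by auto

lemma cyc3:
  assumes "distinct [a, b, c]" "{a, b, c} \<subseteq> VG" "(a, b) \<in> AG" "(b, c) \<in> AG" "(c, a) \<in> AG"
  shows "is_cycle VG AG [a, b, c]"
proof -
  have L: "length [a, b, c] = 3" by simp
  show ?thesis unfolding is_cycle_def L all_less_3 using assms by simp
qed

lemma cyc4:
  assumes "distinct [a, b, c, d]" "{a, b, c, d} \<subseteq> VG" "(a, b) \<in> AG" "(b, c) \<in> AG" "(c, d) \<in> AG" "(d, a) \<in> AG"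
  shows "is_cycle VG AG [a, b, c, d]"
proof -
  have L: "length [a, b, c, d] = 4" by simp
  show ?thesis unfolding is_cycle_def L all_less_4 using assms by simp
qed

lemma cyc5:
  assumes "distinct [a, b, c, d, e]" "{a, b, c, d, e} \<subseteq> VG" "(a, b) \<in> AG" "(b, c) \<in> AG" "(c, d) \<in> AG"
    "(d, e) \<in> AG" "(e, a) \<in> AG"
  shows "is_cycle VG AG [a, b, c, d, e]"
proof -
  have L: "length [a, b, c, d, e] = 5" by simp
  show ?thesis unfolding is_cycle_def L all_less_5 using assms by simp
qed


context LM
begin

lemma side_card:
  assumes "y \<in> cycle_side VG AG rotG cs b" shows "1 \<le> card (cycle_side VG AG rotG cs b)"
proof -
  have "finite (cycle_side VG AG rotG cs b)" by (rule finite_subset[OF side_sub finV[OF Gpg]])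
  then show ?thesis using assms by (metis One_nat_def Suc_leI card_gt_0_iff empty_iff)
qed

lemma case2:
  assumes e: "(u, p1) \<in> A" "(p1, w) \<in> A" and bad: "(f u, f w) \<in> AG" "(u, w) \<notin> A" and uw: "u \<noteq> w"
    and noobs: "\<forall>cs. set cs \<subseteq> f ` V \<longrightarrow> \<not> obstructing_cycle VG AG rotG cs"
  shows False
proof -
  have V: "u \<in> V" "p1 \<in> V" "w \<in> V" using ZAV e by auto
  have ne: "u \<noteq> p1" "p1 \<noteq> w" using e Zirr by auto
  have fne: "f u \<noteq> f p1" "f p1 \<noteq> f w" "f u \<noteq> f w" using ne uw finj_eq V by auto
  define cs where "cs = [f u, f p1, f w]"
  have g: "(f u, f p1) \<in> AG" "(f p1, f w) \<in> AG" "(f w, f u) \<in> AG" "(f p1, f u) \<in> AG"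
    using fA e bad Gsym by auto
  have cyc: "is_cycle VG AG cs" unfolding cs_def
    by (rule cyc3) (use fne fV V g in auto)
  obtain y where r: "rotG (f p1, f w) = (f p1, y)" using rot_fst[OF Gpg g(2)] by (cases "rotG (f p1, f w)") auto
  have py: "(f p1, y) \<in> AG" using rot_in[OF Gpg g(2)] r by simp
  have yu: "y \<noteq> f u"
  proof
    assume "y = f u"
    then show False using ZK2[OF V(2) Zsym[OF e(1)] e(2) bad(2) uw] r by simp
  qed
  have "y \<noteq> f w" using rot_no_fix[OF Gpg g(2) g(4)] fne r by auto
  moreover have "y \<noteq> f p1" using py Girr by auto
  ultimately have yT: "y \<in> cycle_side VG AG rotG cs True"
    by (intro side_mem_T[of 1 cs "f p1" "f w" "f u" rotG y]) (use cs_def r yu py GAV fne in auto)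
  obtain y' where r': "rotG (f p1, f u) = (f p1, y')" using rot_fst[OF Gpg g(4)] by (cases "rotG (f p1, f u)") auto
  have py': "(f p1, y') \<in> AG" using rot_in[OF Gpg g(4)] r' by simp
  have yw: "y' \<noteq> f w"
  proof
    assume "y' = f w"
    have "(w, u) \<notin> A" using bad(2) Zsym by blast
    then show False using ZK2[OF V(2) e(2) Zsym[OF e(1)] _ uw[symmetric]] r' \<open>y' = f w\<close> by simp
  qed
  have "y' \<noteq> f u" using rot_no_fix[OF Gpg g(4) g(2)] fne r' by auto
  moreover have "y' \<noteq> f p1" using py' Girr by auto
  ultimately have yF: "y' \<in> cycle_side VG AG rotG cs False"
    by (intro side_mem_F[of 1 cs "f p1" "f w" "f u" rotG y']) (use cs_def r' yw py' GAV fne in auto)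
  have "obstructing_cycle VG AG rotG cs"
    unfolding obstructing_cycle_def using cyc side_card[OF yT] side_card[OF yF] cs_def by simp
  moreover have "set cs \<subseteq> f ` V" using cs_def V by auto
  ultimately show False using noobs by blast
qed

lemma case3:
  assumes e: "(u, p1) \<in> A" "(p1, p2) \<in> A" "(p2, w) \<in> A" and bad: "(f u, f w) \<in> AG"
    and dst: "distinct [u, p1, p2, w]" and ch: "(f u, f p2) \<notin> AG" "(f p1, f w) \<notin> AG"
    and noobs: "\<forall>cs. set cs \<subseteq> f ` V \<longrightarrow> \<not> obstructing_cycle VG AG rotG cs"
  shows False
proof -
  have V: "u \<in> V" "p1 \<in> V" "p2 \<in> V" "w \<in> V" using ZAV e by auto
  define c0 where "c0 = f u"
  define c1 where "c1 = f p1"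
  define c2 where "c2 = f p2"
  define c3 where "c3 = f w"
  note cdefs = c0_def c1_def c2_def c3_def
  have cd: "distinct [c0, c1, c2, c3]"
  proof -
    have "set [u, p1, p2, w] \<subseteq> V" using V by auto
    then have "inj_on f (set [u, p1, p2, w])" using finj inj_on_subset by blast
    then have "distinct (map f [u, p1, p2, w])" using dst distinct_map by blast
    then show ?thesis unfolding cdefs by simp
  qed
  have g: "(c0, c1) \<in> AG" "(c1, c2) \<in> AG" "(c2, c3) \<in> AG" "(c3, c0) \<in> AG" "(c0, c3) \<in> AG"
    using fA e bad Gsym cdefs by auto
  have chs: "(c0, c2) \<notin> AG" "(c1, c3) \<notin> AG" "(c3, c1) \<notin> AG" using ch Gsym cdefs by auto
  define cs where "cs = [c0, c1, c2, c3]"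
  have cyc: "is_cycle VG AG cs" unfolding cs_def
    by (rule cyc4) (use cd fV V g cdefs in auto)
  obtain y where r: "rotG (c0, c1) = (c0, y)" using rot_fst[OF Gpg g(1)] by (cases "rotG (c0, c1)") auto
  have s: "y \<noteq> c3 \<and> y \<noteq> c1 \<and> y \<noteq> c0 \<and> (c0, y) \<in> AG \<and> y \<in> VG"
    by (rule G_step[OF g(1) g(5) chs(3) _ r]) (use cd in auto)
  have "y \<noteq> c2" using s chs by auto
  then have yT: "y \<in> cycle_side VG AG rotG cs True"
    by (intro side_mem_T[of 0 cs c0 c1 c3 rotG y]) (use cs_def r s cd in auto)
  obtain y' where r': "rotG (c0, c3) = (c0, y')" using rot_fst[OF Gpg g(5)] by (cases "rotG (c0, c3)") auto
  have s': "y' \<noteq> c1 \<and> y' \<noteq> c3 \<and> y' \<noteq> c0 \<and> (c0, y') \<in> AG \<and> y' \<in> VG"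
    by (rule G_step[OF g(5) g(1) chs(2) _ r']) (use cd in auto)
  have "y' \<noteq> c2" using s' chs by auto
  then have yF: "y' \<in> cycle_side VG AG rotG cs False"
    by (intro side_mem_F[of 0 cs c0 c1 c3 rotG y']) (use cs_def r' s' cd in auto)
  have "obstructing_cycle VG AG rotG cs"
    unfolding obstructing_cycle_def using cyc side_card[OF yT] side_card[OF yF] cs_def by simp
  moreover have "set cs \<subseteq> f ` V" using cs_def V cdefs by auto
  ultimately show False using noobs by blast
qed

lemma case4:
  assumes e01: "(p0, p1) \<in> A" and e12: "(p1, p2) \<in> A" and e23: "(p2, p3) \<in> A" and e34: "(p3, p4) \<in> A"
    and bad: "(f p4, f p0) \<in> AG" "(p4, p0) \<notin> A"
    and nch: "(p0, p2) \<notin> A" "(p0, p3) \<notin> A" "(p1, p3) \<notin> A" "(p1, p4) \<notin> A" "(p2, p4) \<notin> A"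
    and dst: "distinct [p0, p1, p2, p3, p4]"
    and minb: "\<forall>a\<in>V. \<forall>b\<in>V. (f a, f b) \<in> AG \<and> (a, b) \<notin> A \<longrightarrow> 4 \<le> dist A a b"
    and outer: "on_outer_boundary V A Out [p0, p1, p2, p3, p4] \<Longrightarrow>
       \<exists>i\<in>{1, 2, 3}. \<not> cut_vertex V A ([p0, p1, p2, p3, p4] ! i) \<and>
          deg A ([p0, p1, p2, p3, p4] ! i) + 2 \<le> \<delta> ([p0, p1, p2, p3, p4] ! i)"
    and noobs: "\<forall>cs. set cs \<subseteq> f ` V \<longrightarrow> \<not> obstructing_cycle VG AG rotG cs"
  shows False
proof -
  have V: "p0 \<in> V" "p1 \<in> V" "p2 \<in> V" "p3 \<in> V" "p4 \<in> V" using ZAV e01 e12 e23 e34 by auto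
  have T: "2 \<le> card (cycle_side VG AG rotG [f p0, f p1, f p2, f p3, f p4] True)"
    by (rule K4core[OF e01 e12 e23 e34 bad nch dst minb outer])
  have outer': "on_outer_boundary V A Out [p4, p3, p2, p1, p0] \<Longrightarrow>
       \<exists>i\<in>{1, 2, 3}. \<not> cut_vertex V A ([p4, p3, p2, p1, p0] ! i) \<and>
          deg A ([p4, p3, p2, p1, p0] ! i) + 2 \<le> \<delta> ([p4, p3, p2, p1, p0] ! i)"
  proof -
    assume "on_outer_boundary V A Out [p4, p3, p2, p1, p0]"
    then have "on_outer_boundary V A Out [p0, p1, p2, p3, p4]" by (rule outer_rev5)
    then obtain i where i: "i \<in> {1, 2, 3}" "\<not> cut_vertex V A ([p0, p1, p2, p3, p4] ! i)"
          "deg A ([p0, p1, p2, p3, p4] ! i) + 2 \<le> \<delta> ([p0, p1, p2, p3, p4] ! i)"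
      using outer by blast
    show ?thesis
    proof (rule bexI[of _ "4 - i"])
      show "4 - i \<in> {1, 2, 3}" using i(1) by auto
      have "[p4, p3, p2, p1, p0] ! (4 - i) = [p0, p1, p2, p3, p4] ! i" using i(1) by auto
      then show "\<not> cut_vertex V A ([p4, p3, p2, p1, p0] ! (4 - i)) \<and>
          deg A ([p4, p3, p2, p1, p0] ! (4 - i)) + 2 \<le> \<delta> ([p4, p3, p2, p1, p0] ! (4 - i))"
        using i by simp
    qed
  qed
  have F': "2 \<le> card (cycle_side VG AG rotG [f p4, f p3, f p2, f p1, f p0] True)"
  proof (rule K4core)
    show "(p4, p3) \<in> A" "(p3, p2) \<in> A" "(p2, p1) \<in> A" "(p1, p0) \<in> A" using e01 e12 e23 e34 Zsym by auto
    show "(f p0, f p4) \<in> AG" using Gsym bad by auto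
    show "(p0, p4) \<notin> A" using Zsym bad by auto
    show "(p4, p2) \<notin> A" "(p4, p1) \<notin> A" "(p3, p1) \<notin> A" "(p3, p0) \<notin> A" "(p2, p0) \<notin> A"
      using nch Zsym by blast+
    show "distinct [p4, p3, p2, p1, p0]" using dst by auto
  qed (use minb outer' in auto)
  have F: "2 \<le> card (cycle_side VG AG rotG [f p0, f p1, f p2, f p3, f p4] False)"
    using F' side_rev5 by metis
  have cyc: "is_cycle VG AG [f p0, f p1, f p2, f p3, f p4]"
  proof (rule cyc5)
    have "set [p0, p1, p2, p3, p4] \<subseteq> V" using V by auto
    then have "inj_on f (set [p0, p1, p2, p3, p4])" using finj inj_on_subset by blast
    then have "distinct (map f [p0, p1, p2, p3, p4])" using dst distinct_map by blast
    then show "distinct [f p0, f p1, f p2, f p3, f p4]" by simp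
  qed (use fV V fA e01 e12 e23 e34 bad Gsym in auto)
  have "obstructing_cycle VG AG rotG [f p0, f p1, f p2, f p3, f p4]"
    unfolding obstructing_cycle_def using cyc T F by simp
  moreover have "set [f p0, f p1, f p2, f p3, f p4] \<subseteq> f ` V" using V by auto
  ultimately show False using noobs by blast
qed

end


lemma len2: "length xs = 2 \<Longrightarrow> \<exists>a b. xs = [a, b]"
  by (auto simp: numeral_eq_Suc length_Suc_conv)
lemma len3: "length xs = 3 \<Longrightarrow> \<exists>a b c. xs = [a, b, c]"
  by (auto simp: numeral_eq_Suc length_Suc_conv)
lemma len4: "length xs = 4 \<Longrightarrow> \<exists>a b c d. xs = [a, b, c, d]"
  by (auto simp: numeral_eq_Suc length_Suc_conv)
lemma len5: "length xs = 5 \<Longrightarrow> \<exists>a b c d e. xs = [a, b, c, d, e]"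
  by (auto simp: numeral_eq_Suc length_Suc_conv)

theorem lemma3p1:
  fixes V :: "'v set" and A :: "('v \<times> 'v) set" and rot :: "'v \<times> 'v \<Rightarrow> 'v \<times> 'v"
    and Out :: "('v \<times> 'v) set" and \<delta> :: "'v \<Rightarrow> nat"
    and VG :: "'w set" and AG :: "('w \<times> 'w) set" and rotG :: "'w \<times> 'w \<Rightarrow> 'w \<times> 'w"
    and f :: "'v \<Rightarrow> 'w"
  assumes conf: "configuration V A rot Out \<delta>"
    and diam: "\<forall>u\<in>V. \<forall>w\<in>V. dist A u w \<le> 4"
    and dist4: "\<forall>u\<in>V. \<forall>w\<in>V. dist A u w = 4 \<longrightarrow>
       (\<exists>P. is_path A P \<and> length P = 5 \<and> hd P = u \<and> last P = w \<and>
          (\<not> on_outer_boundary V A Out P \<or>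
           (on_outer_boundary V A Out P \<and>
            (\<exists>i\<in>{1, 2, 3}. \<not> cut_vertex V A (P ! i) \<and> deg A (P ! i) + 2 \<le> \<delta> (P ! i)))))"
    and tri: "triangulation VG AG rotG"
    and cont: "contains_via V A rot Out \<delta> VG AG rotG f"
    and noobs: "\<forall>cs. set cs \<subseteq> f ` V \<longrightarrow> \<not> obstructing_cycle VG AG rotG cs"
  shows "induced_via V A rot Out \<delta> VG AG rotG f"
proof -
  interpret LM V A rot Out \<delta> VG AG rotG f by (rule LM.intro[OF conf tri cont])
  have adj: "\<forall>u\<in>V. \<forall>w\<in>V. (f u, f w) \<in> AG \<longrightarrow> (u, w) \<in> A"
  proof (rule ccontr)
    assume nadj: "\<not> (\<forall>u\<in>V. \<forall>w\<in>V. (f u, f w) \<in> AG \<longrightarrow> (u, w) \<in> A)"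
    define P where "P k = (\<exists>u w. u \<in> V \<and> w \<in> V \<and> (f u, f w) \<in> AG \<and> (u, w) \<notin> A \<and> dist A u w = k)" for k
    have exP: "\<exists>k. P k" using nadj unfolding P_def by blast
    define K where "K = (LEAST k. P k)"
    have "P K" using LeastI_ex[OF exP] K_def by simp
    then obtain u w where uw: "u \<in> V" "w \<in> V" "(f u, f w) \<in> AG" "(u, w) \<notin> A" "dist A u w = K"
      unfolding P_def by blast
    have minb: "\<forall>a\<in>V. \<forall>b\<in>V. (f a, f b) \<in> AG \<and> (a, b) \<notin> A \<longrightarrow> K \<le> dist A a b"
    proof (intro ballI impI)
      fix a b assume "a \<in> V" "b \<in> V" "(f a, f b) \<in> AG \<and> (a, b) \<notin> A"
      then have "P (dist A a b)" unfolding P_def by blast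
      then show "K \<le> dist A a b" unfolding K_def by (rule Least_le)
    qed
    have une: "u \<noteq> w" using uw(3) Girr by auto
    obtain xs where xs: "walk_in V A xs" "hd xs = u" "last xs = w"
      using conn[OF Zpg] uw unfolding connected_on_def by blast
    obtain ys where ys: "is_walk A ys" "hd ys = u" "last ys = w" "length ys = Suc K"
      using dist_walk[OF walk_in_is_walk[OF xs(1)] xs(2,3)] uw(5) by auto
    have K4: "K \<le> 4" using diam uw by auto
    have Kd: "dist A u w \<le> m" if "is_walk A zs" "hd zs = u" "last zs = w" "length zs = Suc m" for zs m
      using dist_le[OF that(1-3)] that(4) by simp
    have "K = 0 \<or> K = 1 \<or> K = 2 \<or> K = 3 \<or> K = 4" using K4 by auto
    then show False
    proof (elim disjE)
      assume "K = 0"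
      then obtain y where "ys = [y]" using ys(4) by (cases ys) auto
      then show False using ys une by simp
    next
      assume "K = 1"
      then have "length ys = 2" using ys(4) by simp
      then obtain y0 y1 where "ys = [y0, y1]" using len2 by blast
      then show False using ys uw by simp
    next
      assume "K = 2"
      then have "length ys = 3" using ys(4) by simp
      then obtain y0 y1 y2 where yy: "ys = [y0, y1, y2]" using len3 by blast
      then show False using ys uw une case2[of u y1 w] noobs by auto
    next
            assume K: "K = 3"
            then have "length ys = 4" using ys(4) by simp
            then obtain y0 p1 p2 y3 where yy0: "ys = [y0, p1, p2, y3]" using len4 by blast
            then have yy: "ys = [u, p1, p2, w]" using ys by simp
            have e: "(u, p1) \<in> A" "(p1, p2) \<in> A" "(p2, w) \<in> A" using ys yy by auto
            have "u \<noteq> p1" "p1 \<noteq> p2" "p2 \<noteq> w" using e Zirr by auto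
            moreover have "u \<noteq> p2"
            proof
              assume "u = p2"
              then have "dist A u w \<le> 1" using Kd[of "[u, w]" 1] e by simp
              then show False using uw K by simp
            qed
            moreover have "p1 \<noteq> w"
            proof
              assume "p1 = w"
              then have "dist A u w \<le> 1" using Kd[of "[u, w]" 1] e by simp
              then show False using uw K by simp
            qed
            ultimately have dst: "distinct [u, p1, p2, w]" using une by auto
            have V: "u \<in> V" "p1 \<in> V" "p2 \<in> V" "w \<in> V" using ZAV e by auto
            have c1: "(f u, f p2) \<notin> AG"
            proof
              assume a: "(f u, f p2) \<in> AG"
              have "(u, p2) \<notin> A"
              proof
                assume "(u, p2) \<in> A"
                then have "dist A u w \<le> 2" using Kd[of "[u, p2, w]" 2] e by simp
                then show False using uw K by simp
              qed
              then have "K \<le> dist A u p2" using minb V a by blast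
              moreover have "dist A u p2 \<le> 2" using dist_le[of A "[u, p1, p2]" u p2] e by simp
              ultimately show False using K by simp
            qed
            have c2: "(f p1, f w) \<notin> AG"
            proof
              assume a: "(f p1, f w) \<in> AG"
              have "(p1, w) \<notin> A"
              proof
                assume "(p1, w) \<in> A"
                then have "dist A u w \<le> 2" using Kd[of "[u, p1, w]" 2] e by simp
                then show False using uw K by simp
              qed
              then have "K \<le> dist A p1 w" using minb V a by blast
              moreover have "dist A p1 w \<le> 2" using dist_le[of A "[p1, p2, w]" p1 w] e by simp
              ultimately show False using K by simp
            qed
            show False by (rule case3[OF e uw(3) dst c1 c2 noobs])
          next
            assume K: "K = 4"
            obtain Q where Q: "is_path A Q" "length Q = 5" "hd Q = u" "last Q = w"
              "\<not> on_outer_boundary V A Out Q \<or> (on_outer_boundary V A Out Q \<and>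
                (\<exists>i\<in>{1, 2, 3}. \<not> cut_vertex V A (Q ! i) \<and> deg A (Q ! i) + 2 \<le> \<delta> (Q ! i)))"
              using dist4 uw K by blast
            then obtain q0 p1 p2 p3 q4 where qq0: "Q = [q0, p1, p2, p3, q4]" using len5[OF Q(2)] by blast
            then have qq: "Q = [u, p1, p2, p3, w]" using Q by simp
            have e: "(u, p1) \<in> A" "(p1, p2) \<in> A" "(p2, p3) \<in> A" "(p3, w) \<in> A"
              using Q(1) qq unfolding is_path_def by auto
            have dst: "distinct [u, p1, p2, p3, w]" using Q(1) qq unfolding is_path_def by simp
            have sc: "dist A u w \<le> 3" if "is_walk A zs" "hd zs = u" "last zs = w" "length zs \<le> 4" for zs
              using dist_le[OF that(1-3)] that(4) by simp
            have nch: "(u, p2) \<notin> A" "(u, p3) \<notin> A" "(p1, p3) \<notin> A" "(p1, w) \<notin> A" "(p2, w) \<notin> A"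
            proof -
              show "(u, p2) \<notin> A" using sc[of "[u, p2, p3, w]"] e uw K by auto
              show "(u, p3) \<notin> A" using sc[of "[u, p3, w]"] e uw K by auto
              show "(p1, p3) \<notin> A" using sc[of "[u, p1, p3, w]"] e uw K by auto
              show "(p1, w) \<notin> A" using sc[of "[u, p1, w]"] e uw K by auto
              show "(p2, w) \<notin> A" using sc[of "[u, p1, p2, w]"] e uw K by auto
            qed
            have bad: "(f w, f u) \<in> AG" "(w, u) \<notin> A" using uw Gsym Zsym by blast+
            have minb4: "\<forall>a\<in>V. \<forall>b\<in>V. (f a, f b) \<in> AG \<and> (a, b) \<notin> A \<longrightarrow> 4 \<le> dist A a b"
              using minb K by simp
            have outer: "on_outer_boundary V A Out [u, p1, p2, p3, w] \<Longrightarrow>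
               \<exists>i\<in>{1, 2, 3}. \<not> cut_vertex V A ([u, p1, p2, p3, w] ! i) \<and>
                 deg A ([u, p1, p2, p3, w] ! i) + 2 \<le> \<delta> ([u, p1, p2, p3, w] ! i)"
              using Q(5) qq by blast
            show False by (rule case4[OF e bad nch dst minb4 outer noobs])
    qed
  qed
  show ?thesis unfolding induced_via_def using cont adj by blast
qed


end
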